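(* For all $l,m\in\mathbb{Z}_{\ge0}$ and generic $x,y\in\mathbb{Q}(q)$, the $\mathcal{U}(\epsilon)$-module $\mathcal{W}_{l,\epsilon}(x)\otimes\mathcal{W}_{m,\epsilon}(y)$ is irreducible.
   Context: Fix an integer $n\ge 4$ and $\epsilon=(\epsilon_1,\dots,\epsilon_n)\in\{0,1\}^n$. Put $\mathbb{I}=\{1,\dots,n\}$, $I=\{0,1,\dots,n-1\}$; indices in $I$ are read modulo $n$, and the index $0$ is identified with $n$ when regarded as an element of $\mathbb{I}$. Let $P=\bigoplus_{i\in\mathbb{I}}\mathbb{Z}\delta_i$, $\alpha_i=\delta_i-\delta_{i+1}$ ($i\in I$), and let $\langle\alpha_i,\delta_j^\vee\rangle$ denote the coefficient of $\delta_j$ in $\alpha_i$. Let $I_{\rm even}=\{i\in I:\epsilon_i=\epsilon_{i+1}\}$, $I_{\rm odd}=I\setminus I_{\rm even}$. Let $q$ be an indeterminate, $[k]=(q^k-q^{-k})/(q-q^{-1})$, $[2]=q+q^{-1}$, and $q_j=q$ if $\epsilon_j=0$, $q_j=-q^{-1}$ if $\epsilon_j=1$. The generalized quantum group $\mathcal{U}(\epsilon)$ is the $\mathbb{Q}(q)$-algebra generated by pairwise commuting invertible elements $\omega_j$ ($j\in\mathbb{I}$) and $e_i,f_i$ ($i\in I$) with relations: $\omega_je_i\omega_j^{-1}=q_j^{\langle\alpha_i,\delta_j^\vee\rangle}e_i$, $\omega_jf_i\omega_j^{-1}=q_j^{-\langle\alpha_i,\delta_j^\vee\rangle}f_i$;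 $e_if_j-f_je_i=\delta_{ij}(k_i-k_i^{-1})/(q-q^{-1})$ where $k_i=\omega_i\omega_{i+1}^{-1}$; $e_i^2=f_i^2=0$ for $i\in I_{\rm odd}$; $e_ie_j=e_je_i$, $f_if_j=f_jf_i$ if $i\ne j$ are not cyclically adjacent; $e_i^2e_j-(-1)^{\epsilon_i}[2]e_ie_je_i+e_je_i^2=0$ and likewise for $f$ if $i\in I_{\rm even}$, $j=i\pm1$; and for $i\in I_{\rm odd}$: $e_ie_{i-1}e_ie_{i+1}-e_ie_{i+1}e_ie_{i-1}+e_{i+1}e_ie_{i-1}e_i-e_{i-1}e_ie_{i+1}e_i+(-1)^{\epsilon_i}[2]e_ie_{i-1}e_{i+1}e_i=0$ and the same with $f$. Tensor products use $\Delta(\omega_j)=\omega_j\otimes\omega_j$, $\Delta(e_i)=e_i\otimes1+k_i^{-1}\otimes e_i$, $\Delta(f_i)=f_i\otimes k_i+1\otimes f_i$. Let $\mathbb{Z}^n_+(\epsilon)$ be the set of $\mathbf{m}=(m_1,\dots,m_n)$ with $m_i\in\mathbb{Z}_{\ge0}$ if $\epsilon_i=0$ and $m_i\in\{0,1\}$ if $\epsilon_i=1$; $|\mathbf m|=\sum m_i$; $\mathbf{e}_i$ is the $i$-th unit vector ($\mathbf e_0=\mathbf e_n$). For $s\in\mathbb{Z}_{\ge0}$ and $x\in\mathbb{Q}(q)^\times$, $\mathcal{W}_{s,\epsilon}(x)$ is the $\mathcal{U}(\epsilon)$-module with basis $\{|\mathbf m\rangle:|\mathbf m|=s\}$ and $e_i|\mathbf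 m\rangle=x^{\delta_{i0}}q^{m_{i+1}-m_i-1}[m_{i+1}]|\mathbf m+\mathbf e_i-\mathbf e_{i+1}\rangle$ if $\mathbf m+\mathbf e_i-\mathbf e_{i+1}\in\mathbb{Z}^n_+(\epsilon)$ and $0$ otherwise; $f_i|\mathbf m\rangle=x^{-\delta_{i0}}q^{m_i-m_{i+1}-1}[m_i]|\mathbf m-\mathbf e_i+\mathbf e_{i+1}\rangle$ if $\mathbf m-\mathbf e_i+\mathbf e_{i+1}\in\mathbb{Z}^n_+(\epsilon)$ and $0$ otherwise; $\omega_j|\mathbf m\rangle=q_j^{m_j}|\mathbf m\rangle$. *)

theory Defs
  imports "HOL-Computational_Algebra.Polynomial" "HOL-Computational_Algebra.Fraction_Field"
begin

type_synonym K = "rat poly fract"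

definition qq :: K where "qq = Fract [:0, 1:] 1"

definition qint :: "int \<Rightarrow> K" where
  "qint k = (qq powi k - qq powi (-k)) / (qq - inverse qq)"

text \<open>eps j = True means epsilon_j = 1, eps j = False means epsilon_j = 0.\<close>
definition qj :: "(nat \<Rightarrow> bool) \<Rightarrow> nat \<Rightarrow> K" where
  "qj eps j = (if eps j then - inverse qq else qq)"

definition idx :: "nat \<Rightarrow> nat \<Rightarrow> nat" where
  "idx n i = (if i mod n = 0 then n else i mod n)"

text \<open>Z^n_+(epsilon): tuples (m_1,...,m_n) encoded as functions vanishing outside {1..n}.\<close>
definition Zplus :: "nat \<Rightarrow> (nat \<Rightarrow> bool) \<Rightarrow> (nat \<Rightarrow> nat) set" where
  "Zplus n eps = {m. (\<forall>i. i \<notin> {1..n} \<longrightarrow> m i = 0) \<and> (\<forall>i\<in>{1..n}. eps i \<longrightarrow> m i \<le> 1)}"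

definition Wbasis :: "nat \<Rightarrow> (nat \<Rightarrow> bool) \<Rightarrow> nat \<Rightarrow> (nat \<Rightarrow> nat) set" where
  "Wbasis n eps s = {m \<in> Zplus n eps. (\<Sum>i=1..n. m i) = s}"

text \<open>m + e_i - e_(i+1) and m - e_i + e_(i+1) (the guards below ensure no truncation).\<close>
definition mv_e :: "nat \<Rightarrow> nat \<Rightarrow> (nat \<Rightarrow> nat) \<Rightarrow> (nat \<Rightarrow> nat)" where
  "mv_e n i b = b(idx n i := b (idx n i) + 1, idx n (i+1) := b (idx n (i+1)) - 1)"

definition mv_f :: "nat \<Rightarrow> nat \<Rightarrow> (nat \<Rightarrow> nat) \<Rightarrow> (nat \<Rightarrow> nat)" where
  "mv_f n i b = b(idx n i := b (idx n i) - 1, idx n (i+1) := b (idx n (i+1)) + 1)"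

text \<open>Matrices: M b' b is the coefficient of |b'> in X|b>.  Action of e_i on W_{s,eps}(x).\<close>
definition Emat :: "nat \<Rightarrow> (nat \<Rightarrow> bool) \<Rightarrow> nat \<Rightarrow> K \<Rightarrow> nat \<Rightarrow> (nat \<Rightarrow> nat) \<Rightarrow> (nat \<Rightarrow> nat) \<Rightarrow> K" where
  "Emat n eps s x i b' b =
    (if b \<in> Wbasis n eps s \<and> 1 \<le> b (idx n (i+1)) \<and> mv_e n i b \<in> Zplus n eps \<and> b' = mv_e n i b
     then (if i = 0 then x else 1)
          * qq powi (int (b (idx n (i+1))) - int (b (idx n i)) - 1)
          * qint (int (b (idx n (i+1))))
     else 0)"

definition Fmat :: "nat \<Rightarrow> (nat \<Rightarrow> bool) \<Rightarrow> nat \<Rightarrow> K \<Rightarrow> nat \<Rightarrow> (nat \<Rightarrow> nat) \<Rightarrow> (nat \<Rightarrow> nat) \<Rightarrow> K" where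
  "Fmat n eps s x i b' b =
    (if b \<in> Wbasis n eps s \<and> 1 \<le> b (idx n i) \<and> mv_f n i b \<in> Zplus n eps \<and> b' = mv_f n i b
     then (if i = 0 then inverse x else 1)
          * qq powi (int (b (idx n i)) - int (b (idx n (i+1))) - 1)
          * qint (int (b (idx n i)))
     else 0)"

text \<open>Eigenvalue of omega_j on |b>, and of k_i = omega_i omega_(i+1)^(-1).\<close>
definition omval :: "(nat \<Rightarrow> bool) \<Rightarrow> nat \<Rightarrow> (nat \<Rightarrow> nat) \<Rightarrow> K" where
  "omval eps j b = qj eps j ^ b j"

definition kval :: "nat \<Rightarrow> (nat \<Rightarrow> bool) \<Rightarrow> nat \<Rightarrow> (nat \<Rightarrow> nat) \<Rightarrow> K" where
  "kval n eps i b = omval eps (idx n i) b * inverse (omval eps (idx n (i+1)) b)"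

text \<open>Tensor product actions via Delta(e_i) = e_i (x) 1 + k_i^(-1) (x) e_i,
  Delta(f_i) = f_i (x) k_i + 1 (x) f_i, Delta(omega_j) = omega_j (x) omega_j.\<close>
type_synonym tb = "(nat \<Rightarrow> nat) \<times> (nat \<Rightarrow> nat)"

definition TEmat :: "nat \<Rightarrow> (nat \<Rightarrow> bool) \<Rightarrow> nat \<Rightarrow> nat \<Rightarrow> K \<Rightarrow> K \<Rightarrow> nat \<Rightarrow> tb \<Rightarrow> tb \<Rightarrow> K" where
  "TEmat n eps l m x y i bb' bb =
     Emat n eps l x i (fst bb') (fst bb) * (if snd bb' = snd bb then 1 else 0)
   + (if fst bb' = fst bb then inverse (kval n eps i (fst bb)) else 0) * Emat n eps m y i (snd bb') (snd bb)"

definition TFmat :: "nat \<Rightarrow> (nat \<Rightarrow> bool) \<Rightarrow> nat \<Rightarrow> nat \<Rightarrow> K \<Rightarrow> K \<Rightarrow> nat \<Rightarrow> tb \<Rightarrow> tb \<Rightarrow> K" where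
  "TFmat n eps l m x y i bb' bb =
     Fmat n eps l x i (fst bb') (fst bb) * (if snd bb' = snd bb then kval n eps i (snd bb) else 0)
   + (if fst bb' = fst bb then 1 else 0) * Fmat n eps m y i (snd bb') (snd bb)"

definition TOmat :: "(nat \<Rightarrow> bool) \<Rightarrow> nat \<Rightarrow> tb \<Rightarrow> tb \<Rightarrow> K" where
  "TOmat eps j bb' bb = (if bb' = bb then omval eps j (fst bb) * omval eps j (snd bb) else 0)"

definition TOinvmat :: "(nat \<Rightarrow> bool) \<Rightarrow> nat \<Rightarrow> tb \<Rightarrow> tb \<Rightarrow> K" where
  "TOinvmat eps j bb' bb = (if bb' = bb then inverse (omval eps j (fst bb) * omval eps j (snd bb)) else 0)"

definition tensor_gens :: "nat \<Rightarrow> (nat \<Rightarrow> bool) \<Rightarrow> nat \<Rightarrow> nat \<Rightarrow> K \<Rightarrow> K \<Rightarrow> (tb \<Rightarrow> tb \<Rightarrow> K) set" where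
  "tensor_gens n eps l m x y =
     {TEmat n eps l m x y i | i. i < n} \<union> {TFmat n eps l m x y i | i. i < n}
   \<union> {TOmat eps j | j. j \<in> {1..n}} \<union> {TOinvmat eps j | j. j \<in> {1..n}}"

definition Vspace :: "'b set \<Rightarrow> ('b \<Rightarrow> K) set" where
  "Vspace B = {v. \<forall>b. b \<notin> B \<longrightarrow> v b = 0}"

definition mat_apply :: "'b set \<Rightarrow> ('b \<Rightarrow> 'b \<Rightarrow> K) \<Rightarrow> ('b \<Rightarrow> K) \<Rightarrow> ('b \<Rightarrow> K)" where
  "mat_apply B M v = (\<lambda>b'. if b' \<in> B then (\<Sum>b\<in>B. M b' b * v b) else 0)"

definition invariant_subspace :: "'b set \<Rightarrow> ('b \<Rightarrow> 'b \<Rightarrow> K) set \<Rightarrow> ('b \<Rightarrow> K) set \<Rightarrow> bool" where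
  "invariant_subspace B Ms S \<longleftrightarrow>
     S \<subseteq> Vspace B \<and> (\<lambda>_. 0) \<in> S \<and> (\<forall>u\<in>S. \<forall>v\<in>S. (\<lambda>b. u b + v b) \<in> S)
     \<and> (\<forall>c. \<forall>u\<in>S. (\<lambda>b. c * u b) \<in> S) \<and> (\<forall>M\<in>Ms. \<forall>u\<in>S. mat_apply B M u \<in> S)"

definition irreducible_mod :: "'b set \<Rightarrow> ('b \<Rightarrow> 'b \<Rightarrow> K) set \<Rightarrow> bool" where
  "irreducible_mod B Ms \<longleftrightarrow> (\<exists>v\<in>Vspace B. v \<noteq> (\<lambda>_. 0))
     \<and> (\<forall>S. invariant_subspace B Ms S \<longrightarrow> S = {\<lambda>_. 0} \<or> S = Vspace B)"

end

theory Submission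
  imports Defs "Jordan_Normal_Form.Determinant" "Jordan_Normal_Form.Char_Poly"
begin


lemma Fract_pow1: "(Fract (a::'a::idom) 1) ^ k = Fract (a ^ k) 1"
  by (induction k) (auto simp: One_fract_def)

lemma qq_pow: "qq ^ k = Fract (monom 1 k) 1"
  unfolding qq_def Fract_pow1 by (simp add: monom_altdef)

lemma qq_nz[simp]: "qq \<noteq> 0"
  unfolding qq_def by (simp add: Zero_fract_def eq_fract)

lemma qq_pow_eq_1: "qq ^ k = 1 \<longleftrightarrow> k = 0"
proof
  assume "qq ^ k = 1"
  hence "Fract (monom 1 k) 1 = Fract (1::rat poly) 1" by (simp add: qq_pow One_fract_def)
  hence "monom (1::rat) k = 1" by (simp add: eq_fract)
  hence "degree (monom (1::rat) k) = 0" by simp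
  thus "k = 0" by (simp add: degree_monom_eq)
qed simp

lemma qint_nz: assumes "k \<ge> 1" shows "qint k \<noteq> 0"
proof -
  define j where "j = nat k"
  have j: "k = int j" "j \<ge> 1" using assms unfolding j_def by auto
  have d: "qq - inverse qq \<noteq> 0"
  proof
    assume "qq - inverse qq = 0"
    hence "qq = inverse qq" by simp
    hence "qq * qq = 1" by (metis qq_nz right_inverse)
    hence "qq ^ 2 = 1" by (simp add: power2_eq_square)
    thus False using qq_pow_eq_1[of 2] by simp
  qed
  have "qq powi k - qq powi (-k) \<noteq> 0"
  proof
    assume "qq powi k - qq powi (-k) = 0"
    hence "qq ^ j = inverse (qq ^ j)" using j by (simp add: power_int_minus)
    hence "qq ^ j * qq ^ j = 1" by (metis qq_nz power_not_zero right_inverse)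
    hence "qq ^ (2*j) = 1" by (simp add: power_add mult_2)
    thus False using qq_pow_eq_1[of "2*j"] j by simp
  qed
  thus ?thesis unfolding qint_def using d by simp
qed

lemma qj_nz[simp]: "qj eps j \<noteq> 0" unfolding qj_def by simp
lemma omval_nz[simp]: "omval eps j b \<noteq> 0" unfolding omval_def by simp
lemma kval_nz[simp]: "kval n eps i b \<noteq> 0" unfolding kval_def by simp

lemma finite_Wbasis: "finite (Wbasis n eps s)"
proof -
  have "Wbasis n eps s \<subseteq> {f. \<forall>x. (x \<in> {1..n} \<longrightarrow> f x \<in> {0..s}) \<and> (x \<notin> {1..n} \<longrightarrow> f x = 0)}"
  proof
    fix b assume b: "b \<in> Wbasis n eps s"
    hence z: "\<forall>i. i \<notin> {1..n} \<longrightarrow> b i = 0" and sm: "(\<Sum>i=1..n. b i) = s"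
      unfolding Wbasis_def Zplus_def by auto
    have "\<forall>x\<in>{1..n}. b x \<le> s" using sm member_le_sum[of _ "{1..n}" b] by fastforce
    thus "b \<in> {f. \<forall>x. (x \<in> {1..n} \<longrightarrow> f x \<in> {0..s}) \<and> (x \<notin> {1..n} \<longrightarrow> f x = 0)}"
      using z by auto
  qed
  thus ?thesis using finite_subset finite_set_of_finite_funs[of "{1..n}" "{0..s}" 0] by blast
qed

lemma idx_lt: "i < n \<Longrightarrow> idx n i = (if i = 0 then n else i)"
  unfolding idx_def by auto

lemma idx_Suc: "i < n \<Longrightarrow> idx n (i+1) = i+1"
  unfolding idx_def by (cases "i + 1 = n") auto

lemma idx_range: "1 \<le> n \<Longrightarrow> idx n i \<in> {1..n}"
  unfolding idx_def using mod_less_divisor[of n i] by auto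

lemma idx_ne: "2 \<le> n \<Longrightarrow> i < n \<Longrightarrow> idx n i \<noteq> idx n (i+1)"
  using idx_lt[of i n] idx_Suc[of i n] by auto

definition upd :: "(nat \<Rightarrow> nat) \<Rightarrow> nat \<Rightarrow> nat \<Rightarrow> (nat \<Rightarrow> nat)" where
  "upd b p r = b(p := b p - 1, r := b r + 1)"

lemma mv_e_upd: "2 \<le> n \<Longrightarrow> i < n \<Longrightarrow> mv_e n i b = upd b (idx n (i+1)) (idx n i)"
  unfolding mv_e_def upd_def using idx_ne[of n i] by (auto simp: fun_upd_twist)

lemma mv_f_upd: "mv_f n i b = upd b (idx n i) (idx n (i+1))"
  unfolding mv_f_def upd_def by simp

lemma upd_int: "p \<noteq> r \<Longrightarrow> 1 \<le> b p \<Longrightarrow>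
   int (upd b p r q) = int (b q) - (if q = p then 1 else 0) + (if q = r then 1 else 0)"
  unfolding upd_def by auto

lemma Wbasis_Zplus: "b \<in> Wbasis n eps s \<Longrightarrow> b \<in> Zplus n eps"
  unfolding Wbasis_def by auto

lemma Zplus_out: "b \<in> Zplus n eps \<Longrightarrow> i \<notin> {1..n} \<Longrightarrow> b i = 0"
  unfolding Zplus_def by auto

lemma Zplus_eps: "b \<in> Zplus n eps \<Longrightarrow> i \<in> {1..n} \<Longrightarrow> eps i \<Longrightarrow> b i \<le> 1"
  unfolding Zplus_def by auto

lemma Wbasis_sum: "b \<in> Wbasis n eps s \<Longrightarrow> (\<Sum>i=1..n. b i) = s"
  unfolding Wbasis_def by auto

lemma sum_upd:
  assumes "p \<in> {1..n}" "r \<in> {1..n}" "p \<noteq> r" "1 \<le> b p"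
  shows "(\<Sum>i=1..n. upd b p r i) = (\<Sum>i=1..n. b i)"
proof -
  have "int (\<Sum>i=1..n. upd b p r i) = (\<Sum>i=1..n. int (upd b p r i))" by simp
  also have "\<dots> = (\<Sum>i=1..n. int (b i) - (if i = p then 1 else 0) + (if i = r then 1 else 0))"
    using upd_int[of p r b, OF assms(3,4)] by simp
  also have "\<dots> = (\<Sum>i=1..n. int (b i)) - (\<Sum>i=1..n. (if i = p then 1 else 0)) + (\<Sum>i=1..n. (if i = r then 1 else 0))"
    by (simp add: sum.distrib sum_subtractf)
  also have "\<dots> = (\<Sum>i=1..n. int (b i))" using assms(1,2) by simp
  also have "\<dots> = int (\<Sum>i=1..n. b i)" by simp
  finally show ?thesis by linarith
qed

lemma upd_Wbasis:
  assumes b: "b \<in> Wbasis n eps s" and pr: "p \<in> {1..n}" "r \<in> {1..n}" "p \<noteq> r" and bp: "1 \<le> b p"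
    and room: "eps r \<longrightarrow> b r = 0"
  shows "upd b p r \<in> Wbasis n eps s"
proof -
  have z: "b \<in> Zplus n eps" using b by (rule Wbasis_Zplus)
  have "upd b p r \<in> Zplus n eps"
    unfolding Zplus_def
  proof (intro CollectI conjI allI ballI impI)
    fix i assume "i \<notin> {1..n}"
    thus "upd b p r i = 0" using Zplus_out[OF z] pr unfolding upd_def by auto
  next
    fix i assume i: "i \<in> {1..n}" "eps i"
    thus "upd b p r i \<le> 1" using Zplus_eps[OF z] room unfolding upd_def by auto
  qed
  moreover have "(\<Sum>i=1..n. upd b p r i) = s"
    using sum_upd[of p n r b, OF pr bp] Wbasis_sum[OF b] by simp
  ultimately show ?thesis unfolding Wbasis_def by simp
qed

fun runw :: "('l \<Rightarrow> 'c \<Rightarrow> 'c option) \<Rightarrow> 'l list \<Rightarrow> 'c \<Rightarrow> 'c option" where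
  "runw st [] b = Some b"
| "runw st (a # w) b = (case st a b of None \<Rightarrow> None | Some b' \<Rightarrow> runw st w b')"

lemma runw_append: "runw st (w1 @ w2) b = (case runw st w1 b of None \<Rightarrow> None | Some b' \<Rightarrow> runw st w2 b')"
  by (induction w1 arbitrary: b) (auto split: option.splits)

lemma runw_append_Some: "runw st w1 b = Some b1 \<Longrightarrow> runw st w2 b1 = Some b2 \<Longrightarrow> runw st (w1 @ w2) b = Some b2"
  by (simp add: runw_append)

section \<open>Abstract connectivity\<close>

locale conn_setup =
  fixes n :: nat and eps :: "nat \<Rightarrow> bool" and s :: nat
    and st :: "'l \<Rightarrow> (nat \<Rightarrow> nat) \<Rightarrow> (nat \<Rightarrow> nat) option" and nx :: "nat \<Rightarrow> nat" and lt :: "nat \<Rightarrow> 'l"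
    and L :: "'l set"
  assumes nx_range: "\<And>p. p \<in> {1..n} \<Longrightarrow> nx p \<in> {1..n}"
    and nx_ne: "\<And>p. p \<in> {1..n} \<Longrightarrow> nx p \<noteq> p"
    and cover: "\<And>p r. p \<in> {1..n} \<Longrightarrow> r \<in> {1..n} \<Longrightarrow> \<exists>d. r = (nx ^^ d) p"
    and stp: "\<And>p b. p \<in> {1..n} \<Longrightarrow> b \<in> Wbasis n eps s \<Longrightarrow> 1 \<le> b p \<Longrightarrow> (eps (nx p) \<longrightarrow> b (nx p) = 0)
               \<Longrightarrow> st (lt p) b = Some (upd b p (nx p))"
    and lts: "\<And>p. p \<in> {1..n} \<Longrightarrow> lt p \<in> L"
begin

lemma transfer:
  shows "r \<in> {1..n} \<Longrightarrow> p \<in> {1..n} \<Longrightarrow> r = (nx ^^ d) p \<Longrightarrow> p \<noteq> r \<Longrightarrow> b \<in> Wbasis n eps s \<Longrightarrow> 1 \<le> b p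
     \<Longrightarrow> (eps r \<longrightarrow> b r = 0) \<Longrightarrow> \<exists>w. set w \<subseteq> L \<and> runw st w b = Some (upd b p r)"
proof (induction d arbitrary: p b)
  case 0
  then show ?case by simp
next
  case (Suc d)
  define p' where "p' = nx p"
  have p'r: "p' \<in> {1..n}" using nx_range Suc.prems(2) p'_def by simp
  have pp': "p \<noteq> p'" using nx_ne Suc.prems(2) p'_def by metis
  have rd: "r = (nx ^^ d) p'" using Suc.prems(3) unfolding p'_def funpow_Suc_right by simp
  show ?case
  proof (cases "p' = r")
    case True
    have "st (lt p) b = Some (upd b p r)"
      using stp[OF Suc.prems(2,5,6)] Suc.prems(7) True p'_def by simp
    thus ?thesis using lts[OF Suc.prems(2)] by (intro exI[of _ "[lt p]"]) auto
  next
    case False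
    show ?thesis
    proof (cases "eps p' \<longrightarrow> b p' = 0")
      case True
      define b1 where "b1 = upd b p p'"
      have s1: "st (lt p) b = Some b1" using stp[OF Suc.prems(2,5,6)] True p'_def b1_def by simp
      have b1W: "b1 \<in> Wbasis n eps s" using upd_Wbasis[OF Suc.prems(5) Suc.prems(2) p'r pp' Suc.prems(6) True] b1_def by simp
      have "1 \<le> b1 p'" unfolding b1_def upd_def by simp
      moreover have "eps r \<longrightarrow> b1 r = 0" using Suc.prems(4,7) False unfolding b1_def upd_def by auto
      ultimately obtain w where w: "set w \<subseteq> L" "runw st w b1 = Some (upd b1 p' r)"
        using Suc.IH[OF Suc.prems(1) p'r rd False b1W] by blast
      have "upd b1 p' r = upd b p r" unfolding b1_def upd_def using pp' False Suc.prems(4)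
        by (auto simp: fun_eq_iff)
      hence "runw st (lt p # w) b = Some (upd b p r)" using s1 w(2) by simp
      thus ?thesis using w(1) lts[OF Suc.prems(2)] by (intro exI[of _ "lt p # w"]) auto
    next
      case full: False
      have bp': "1 \<le> b p'" using full by simp
      obtain w where w: "set w \<subseteq> L" "runw st w b = Some (upd b p' r)"
        using Suc.IH[OF Suc.prems(1) p'r rd False Suc.prems(5) bp' Suc.prems(7)] by blast
      define b2 where "b2 = upd b p' r"
      have b2W: "b2 \<in> Wbasis n eps s"
        using upd_Wbasis[OF Suc.prems(5) p'r Suc.prems(1) False bp' Suc.prems(7)] b2_def by simp
      have "1 \<le> b2 p" using Suc.prems(4,6) pp' unfolding b2_def upd_def by auto
      moreover have "eps (nx p) \<longrightarrow> b2 (nx p) = 0"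
        using full Zplus_eps[OF Wbasis_Zplus[OF Suc.prems(5)] p'r] False unfolding b2_def upd_def p'_def[symmetric]
        by auto
      ultimately have s2: "st (lt p) b2 = Some (upd b2 p p')" using stp[OF Suc.prems(2) b2W] p'_def by simp
      have "upd b2 p p' = upd b p r" unfolding b2_def upd_def using pp' False Suc.prems(4) bp'
        by (auto simp: fun_eq_iff)
      hence "runw st (w @ [lt p]) b = Some (upd b p r)" using s2 w(2) by (simp add: runw_append b2_def)
      thus ?thesis using w(1) lts[OF Suc.prems(2)] by (intro exI[of _ "w @ [lt p]"]) auto
    qed
  qed
qed

end

definition excess :: "nat \<Rightarrow> (nat \<Rightarrow> nat) \<Rightarrow> (nat \<Rightarrow> nat) \<Rightarrow> nat" where
  "excess n b b' = (\<Sum>q=1..n. b q - b' q)"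

context conn_setup begin

lemma conn:
  shows "b \<in> Wbasis n eps s \<Longrightarrow> b' \<in> Wbasis n eps s \<Longrightarrow> \<exists>w. set w \<subseteq> L \<and> runw st w b = Some b'"
proof (induction "excess n b b'" arbitrary: b rule: less_induct)
  case less
  show ?case
  proof (cases "b = b'")
    case True
    thus ?thesis by (intro exI[of _ "[]"]) auto
  next
    case False
    have zb: "\<forall>i. i \<notin> {1..n} \<longrightarrow> b i = 0" using Zplus_out[OF Wbasis_Zplus[OF less.prems(1)]] by auto
    have zb': "\<forall>i. i \<notin> {1..n} \<longrightarrow> b' i = 0" using Zplus_out[OF Wbasis_Zplus[OF less.prems(2)]] by auto
    have sums: "(\<Sum>i=1..n. b i) = (\<Sum>i=1..n. b' i)" using Wbasis_sum less.prems by metis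
    obtain p where p: "p \<in> {1..n}" "b' p < b p"
    proof (rule ccontr)
      assume "\<not> thesis"
      hence le: "\<forall>q\<in>{1..n}. b q \<le> b' q" using that by force
      have "\<forall>q\<in>{1..n}. b q = b' q"
      proof (rule ccontr)
        assume "\<not> (\<forall>q\<in>{1..n}. b q = b' q)"
        then obtain q where "q \<in> {1..n}" "b q < b' q" using le by force
        hence "\<exists>a\<in>{1..n}. b a < b' a" by blast
        hence "(\<Sum>i=1..n. b i) < (\<Sum>i=1..n. b' i)" using sum_strict_mono_ex1[of "{1..n}" b b'] le by blast
        thus False using sums by simp
      qed
      hence "b = b'" using zb zb' by (auto simp: fun_eq_iff)
      thus False using False by simp
    qed
    obtain r where r: "r \<in> {1..n}" "b r < b' r"
    proof (rule ccontr)
      assume "\<not> thesis"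
      hence le: "\<forall>q\<in>{1..n}. b' q \<le> b q" using that by force
      moreover have "\<exists>a\<in>{1..n}. b' a < b a" using p by blast
      ultimately have "(\<Sum>i=1..n. b' i) < (\<Sum>i=1..n. b i)" using sum_strict_mono_ex1[of "{1..n}" b' b] by blast
      thus False using sums by simp
    qed
    have pr: "p \<noteq> r" using p r by auto
    obtain d where d: "r = (nx ^^ d) p" using cover p(1) r(1) by blast
    have room: "eps r \<longrightarrow> b r = 0" using r Zplus_eps[OF Wbasis_Zplus[OF less.prems(2)] r(1)] by auto
    obtain w1 where w1: "set w1 \<subseteq> L" "runw st w1 b = Some (upd b p r)"
      using transfer[OF r(1) p(1) d pr less.prems(1) _ room] p(2) by auto
    have b1W: "upd b p r \<in> Wbasis n eps s" using upd_Wbasis[OF less.prems(1) p(1) r(1) pr _ room] p(2) by auto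
    have "excess n (upd b p r) b' < excess n b b'"
    proof -
      have "excess n b b' = (\<Sum>q\<in>{1..n}-{p}. b q - b' q) + (b p - b' p)"
        unfolding excess_def using p(1) by (simp add: sum.remove add.commute)
      moreover have "excess n (upd b p r) b' = (\<Sum>q\<in>{1..n}-{p}. upd b p r q - b' q) + (upd b p r p - b' p)"
        unfolding excess_def using p(1) by (simp add: sum.remove add.commute)
      moreover have "(\<Sum>q\<in>{1..n}-{p}. upd b p r q - b' q) = (\<Sum>q\<in>{1..n}-{p}. b q - b' q)"
        using r(2) by (intro sum.cong) (auto simp: upd_def)
      moreover have "upd b p r p - b' p < b p - b' p" using p(2) pr unfolding upd_def by auto
      ultimately show ?thesis by linarith
    qed
    then obtain w2 where w2: "set w2 \<subseteq> L" "runw st w2 (upd b p r) = Some b'"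
      using less.hyps b1W less.prems(2) by blast
    show ?thesis using w1 w2 by (intro exI[of _ "w1 @ w2"]) (auto simp: runw_append)
  qed
qed

end


definition stepE :: "nat \<Rightarrow> (nat \<Rightarrow> bool) \<Rightarrow> nat \<Rightarrow> nat \<Rightarrow> (nat \<Rightarrow> nat) \<Rightarrow> (nat \<Rightarrow> nat) option" where
  "stepE n eps s i b = (if b \<in> Wbasis n eps s \<and> 1 \<le> b (idx n (i+1)) \<and> mv_e n i b \<in> Zplus n eps
     then Some (mv_e n i b) else None)"

definition stepF :: "nat \<Rightarrow> (nat \<Rightarrow> bool) \<Rightarrow> nat \<Rightarrow> nat \<Rightarrow> (nat \<Rightarrow> nat) \<Rightarrow> (nat \<Rightarrow> nat) option" where
  "stepF n eps s i b = (if b \<in> Wbasis n eps s \<and> 1 \<le> b (idx n i) \<and> mv_f n i b \<in> Zplus n eps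
     then Some (mv_f n i b) else None)"

definition coefE :: "nat \<Rightarrow> nat \<Rightarrow> (nat \<Rightarrow> nat) \<Rightarrow> K" where
  "coefE n i b = qq powi (int (b (idx n (i+1))) - int (b (idx n i)) - 1) * qint (int (b (idx n (i+1))))"

definition coefF :: "nat \<Rightarrow> nat \<Rightarrow> (nat \<Rightarrow> nat) \<Rightarrow> K" where
  "coefF n i b = qq powi (int (b (idx n i)) - int (b (idx n (i+1))) - 1) * qint (int (b (idx n i)))"

lemma Emat_step: "Emat n eps s x i b' b = (if stepE n eps s i b = Some b' then (if i = 0 then x else 1) * coefE n i b else 0)"
  unfolding Emat_def stepE_def coefE_def by auto

lemma Fmat_step: "Fmat n eps s x i b' b = (if stepF n eps s i b = Some b' then (if i = 0 then inverse x else 1) * coefF n i b else 0)"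
  unfolding Fmat_def stepF_def coefF_def by auto

lemma coefE_nz: "stepE n eps s i b = Some b' \<Longrightarrow> coefE n i b \<noteq> 0"
  unfolding stepE_def coefE_def using qint_nz by (auto split: if_splits)

lemma coefF_nz: "stepF n eps s i b = Some b' \<Longrightarrow> coefF n i b \<noteq> 0"
  unfolding stepF_def coefF_def using qint_nz by (auto split: if_splits)

lemma stepE_W: "stepE n eps s i b = Some b' \<Longrightarrow> 2 \<le> n \<Longrightarrow> i < n \<Longrightarrow> b \<in> Wbasis n eps s \<and> b' \<in> Wbasis n eps s"
proof -
  assume st: "stepE n eps s i b = Some b'" and n: "2 \<le> n" and i: "i < n"
  hence b: "b \<in> Wbasis n eps s" and c: "1 \<le> b (idx n (i+1))" "mv_e n i b \<in> Zplus n eps" and b': "b' = mv_e n i b"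
    unfolding stepE_def by (auto split: if_splits)
  have "(\<Sum>q=1..n. b' q) = s"
    using b' mv_e_upd[OF n i] sum_upd[of "idx n (i+1)" n "idx n i" b] idx_range[of n] idx_ne[OF n i] c(1) Wbasis_sum[OF b] n
    by auto
  thus ?thesis using b b' c(2) unfolding Wbasis_def by auto
qed

lemma stepF_W: "stepF n eps s i b = Some b' \<Longrightarrow> 2 \<le> n \<Longrightarrow> i < n \<Longrightarrow> b \<in> Wbasis n eps s \<and> b' \<in> Wbasis n eps s"
proof -
  assume st: "stepF n eps s i b = Some b'" and n: "2 \<le> n" and i: "i < n"
  hence b: "b \<in> Wbasis n eps s" and c: "1 \<le> b (idx n i)" "mv_f n i b \<in> Zplus n eps" and b': "b' = mv_f n i b"
    unfolding stepF_def by (auto split: if_splits)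
  have "(\<Sum>q=1..n. b' q) = s"
    using b' mv_f_upd sum_upd[of "idx n i" n "idx n (i+1)" b] idx_range[of n] idx_ne[OF n i] c(1) Wbasis_sum[OF b] n
    by auto
  thus ?thesis using b b' c(2) unfolding Wbasis_def by auto
qed

definition alphaE :: "nat \<Rightarrow> nat \<Rightarrow> nat \<Rightarrow> int" where
  "alphaE n i q = (if q = idx n i then 1 else 0) - (if q = idx n (i+1) then 1 else 0)"

lemma stepE_shift: "stepE n eps s i b = Some b' \<Longrightarrow> 2 \<le> n \<Longrightarrow> i < n \<Longrightarrow> int (b' q) = int (b q) + alphaE n i q"
proof -
  assume st: "stepE n eps s i b = Some b'" and n: "2 \<le> n" and i: "i < n"
  hence c: "1 \<le> b (idx n (i+1))" and b': "b' = mv_e n i b"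
    unfolding stepE_def by (auto split: if_splits)
  show ?thesis using upd_int[of "idx n (i+1)" "idx n i" b q, OF idx_ne[OF n i, symmetric] c] b' mv_e_upd[OF n i] unfolding alphaE_def by auto
qed

lemma stepF_shift: "stepF n eps s i b = Some b' \<Longrightarrow> 2 \<le> n \<Longrightarrow> i < n \<Longrightarrow> int (b' q) = int (b q) - alphaE n i q"
proof -
  assume st: "stepF n eps s i b = Some b'" and n: "2 \<le> n" and i: "i < n"
  hence c: "1 \<le> b (idx n i)" and b': "b' = mv_f n i b"
    unfolding stepF_def by (auto split: if_splits)
  show ?thesis using upd_int[of "idx n i" "idx n (i+1)" b q, OF idx_ne[OF n i] c] b' mv_f_upd unfolding alphaE_def by auto
qed

definition prv :: "nat \<Rightarrow> nat \<Rightarrow> nat" where "prv n p = (if p = 1 then n else p - 1)"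
definition nxt :: "nat \<Rightarrow> nat \<Rightarrow> nat" where "nxt n p = (if p = n then 1 else p + 1)"

lemma prv_pow: "p \<in> {1..n} \<Longrightarrow> k < n \<Longrightarrow> (prv n ^^ k) p = (if k < p then p - k else p + n - k)"
proof (induction k)
  case 0 thus ?case by simp
next
  case (Suc k)
  hence ih: "(prv n ^^ k) p = (if k < p then p - k else p + n - k)" by simp
  have "(prv n ^^ Suc k) p = prv n ((prv n ^^ k) p)" by simp
  also have "\<dots> = prv n (if k < p then p - k else p + n - k)" by (simp only: ih)
  finally show ?case using Suc.prems unfolding prv_def by auto
qed

lemma nxt_pow: "p \<in> {1..n} \<Longrightarrow> k < n \<Longrightarrow> (nxt n ^^ k) p = (if p + k \<le> n then p + k else p + k - n)"
proof (induction k)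
  case 0 thus ?case by simp
next
  case (Suc k)
  hence ih: "(nxt n ^^ k) p = (if p + k \<le> n then p + k else p + k - n)" by simp
  have "(nxt n ^^ Suc k) p = nxt n ((nxt n ^^ k) p)" by simp
  also have "\<dots> = nxt n (if p + k \<le> n then p + k else p + k - n)" by (simp only: ih)
  finally show ?case using Suc.prems unfolding nxt_def by auto
qed

lemma conn_setup_E: assumes n: "2 \<le> n"
  shows "conn_setup n eps s (stepE n eps s) (prv n) (\<lambda>p. p - 1) {..<n}"
proof
  fix p assume p: "p \<in> {1..n}"
  show "prv n p \<in> {1..n}" using p n unfolding prv_def by auto
  show "prv n p \<noteq> p" using p n unfolding prv_def by auto
  show "p - 1 \<in> {..<n}" using p by auto
next
  fix p r assume p: "p \<in> {1..n}" and r: "r \<in> {1..n}"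
  show "\<exists>d. r = (prv n ^^ d) p"
  proof (cases "r \<le> p")
    case True
    thus ?thesis using prv_pow[OF p, of "p - r"] p r by (intro exI[of _ "p - r"]) auto
  next
    case False
    thus ?thesis using prv_pow[OF p, of "p + n - r"] p r by (intro exI[of _ "p + n - r"]) auto
  qed
next
  fix p b assume p: "p \<in> {1..n}" and b: "b \<in> Wbasis n eps s" and bp: "1 \<le> b p"
    and room: "eps (prv n p) \<longrightarrow> b (prv n p) = 0"
  have i: "p - 1 < n" using p by auto
  have i1: "idx n (p - 1 + 1) = p" using idx_Suc[OF i] p by auto
  have i0: "idx n (p - 1) = prv n p" using idx_lt[OF i] p unfolding prv_def by auto
  have mv: "mv_e n (p - 1) b = upd b p (prv n p)" using mv_e_upd[OF n i] i0 i1 by simp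
  have pp: "prv n p \<in> {1..n}" "p \<noteq> prv n p" using p n unfolding prv_def by auto
  have "upd b p (prv n p) \<in> Wbasis n eps s" using upd_Wbasis[OF b p pp(1) pp(2) bp room] .
  thus "stepE n eps s (p - 1) b = Some (upd b p (prv n p))"
    unfolding stepE_def using b bp i1 mv Wbasis_Zplus by auto
qed

lemma conn_setup_F: assumes n: "2 \<le> n"
  shows "conn_setup n eps s (stepF n eps s) (nxt n) (\<lambda>p. p mod n) {..<n}"
proof
  fix p assume p: "p \<in> {1..n}"
  show "nxt n p \<in> {1..n}" using p n unfolding nxt_def by auto
  show "nxt n p \<noteq> p" using p n unfolding nxt_def by auto
  show "p mod n \<in> {..<n}" using p n by auto
next
  fix p r assume p: "p \<in> {1..n}" and r: "r \<in> {1..n}"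
  show "\<exists>d. r = (nxt n ^^ d) p"
  proof (cases "p \<le> r")
    case True
    thus ?thesis using nxt_pow[OF p, of "r - p"] p r by (intro exI[of _ "r - p"]) auto
  next
    case False
    thus ?thesis using nxt_pow[OF p, of "r + n - p"] p r by (intro exI[of _ "r + n - p"]) auto
  qed
next
  fix p b assume p: "p \<in> {1..n}" and b: "b \<in> Wbasis n eps s" and bp: "1 \<le> b p"
    and room: "eps (nxt n p) \<longrightarrow> b (nxt n p) = 0"
  have i: "p mod n < n" using p by auto
  have i0: "idx n (p mod n) = p" using p unfolding idx_def by (cases "p = n") auto
  have i1: "idx n (p mod n + 1) = nxt n p" using idx_Suc[OF i] p n unfolding nxt_def by (cases "p = n") auto
  have mv: "mv_f n (p mod n) b = upd b p (nxt n p)" using mv_f_upd i0 i1 by simp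
  have pp: "nxt n p \<in> {1..n}" "p \<noteq> nxt n p" using p n unfolding nxt_def by auto
  have "upd b p (nxt n p) \<in> Wbasis n eps s" using upd_Wbasis[OF b p pp(1) pp(2) bp room] .
  thus "stepF n eps s (p mod n) b = Some (upd b p (nxt n p))"
    unfolding stepF_def using b bp i0 mv Wbasis_Zplus by auto
qed

lemma connE: "2 \<le> n \<Longrightarrow> b \<in> Wbasis n eps s \<Longrightarrow> b' \<in> Wbasis n eps s \<Longrightarrow>
   \<exists>w. set w \<subseteq> {..<n} \<and> runw (stepE n eps s) w b = Some b'"
  using conn_setup.conn[OF conn_setup_E] by blast

lemma connF: "2 \<le> n \<Longrightarrow> b \<in> Wbasis n eps s \<Longrightarrow> b' \<in> Wbasis n eps s \<Longrightarrow>
   \<exists>w. set w \<subseteq> {..<n} \<and> runw (stepF n eps s) w b = Some b'"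
  using conn_setup.conn[OF conn_setup_F] by blast




lemma sum_list_swap_sum: "(\<Sum>x\<leftarrow>xs. \<Sum>j\<in>A. f x j) = (\<Sum>j\<in>A. \<Sum>x\<leftarrow>xs. f x j)"
  by (induction xs) (auto simp: sum.distrib)

lemma sum_list_mult_left: "c * (\<Sum>x\<leftarrow>xs. f x) = (\<Sum>x\<leftarrow>xs. c * f x)" for c :: "'a::comm_semiring_1"
  by (induction xs) (auto simp: distrib_left)

lemma sum_list_mult_right: "(\<Sum>x\<leftarrow>xs. f x) * c = (\<Sum>x\<leftarrow>xs. f x * c)" for c :: "'a::comm_semiring_1"
  by (induction xs) (auto simp: distrib_right)

lemma sum_list_map_concat: "(\<Sum>x\<leftarrow>concat xss. f x) = (\<Sum>xs\<leftarrow>xss. \<Sum>x\<leftarrow>xs. f x)"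
  by (induction xss) auto

lemma W_exists_gt:
  assumes b: "b \<in> Wbasis n eps s" and b': "b' \<in> Wbasis n eps s" and ne: "b \<noteq> b'"
  shows "\<exists>p\<in>{1..n}. b' p < b p"
proof (rule ccontr)
  assume "\<not> (\<exists>p\<in>{1..n}. b' p < b p)"
  hence le: "\<forall>q\<in>{1..n}. b q \<le> b' q" by force
  have zb: "\<forall>i. i \<notin> {1..n} \<longrightarrow> b i = 0" using Zplus_out[OF Wbasis_Zplus[OF b]] by auto
  have zb': "\<forall>i. i \<notin> {1..n} \<longrightarrow> b' i = 0" using Zplus_out[OF Wbasis_Zplus[OF b']] by auto
  have sums: "(\<Sum>i=1..n. b i) = (\<Sum>i=1..n. b' i)" using Wbasis_sum b b' by metis
  have "\<forall>q\<in>{1..n}. b q = b' q"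
  proof (rule ccontr)
    assume "\<not> (\<forall>q\<in>{1..n}. b q = b' q)"
    then obtain q where "q \<in> {1..n}" "b q < b' q" using le by force
    hence "\<exists>a\<in>{1..n}. b a < b' a" by blast
    hence "(\<Sum>i=1..n. b i) < (\<Sum>i=1..n. b' i)" using sum_strict_mono_ex1[of "{1..n}" b b'] le by blast
    thus False using sums by simp
  qed
  hence "b = b'" using zb zb' by (auto simp: fun_eq_iff)
  thus False using ne by simp
qed

locale monoact =
  fixes n :: nat and eps :: "nat \<Rightarrow> bool" and s :: nat
    and st :: "nat \<Rightarrow> (nat \<Rightarrow> nat) \<Rightarrow> (nat \<Rightarrow> nat) option" and coef :: "nat \<Rightarrow> (nat \<Rightarrow> nat) \<Rightarrow> K"
    and sh1 :: "nat \<Rightarrow> nat \<Rightarrow> int" and L :: "nat set"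
  assumes st_W: "\<And>a b b'. st a b = Some b' \<Longrightarrow> a \<in> L \<Longrightarrow> b \<in> Wbasis n eps s \<and> b' \<in> Wbasis n eps s"
    and st_shift: "\<And>a b b' q. st a b = Some b' \<Longrightarrow> a \<in> L \<Longrightarrow> int (b' q) = int (b q) + sh1 a q"
    and coef_nz: "\<And>a b b'. st a b = Some b' \<Longrightarrow> a \<in> L \<Longrightarrow> coef a b \<noteq> 0"
    and conn: "\<And>b b'. b \<in> Wbasis n eps s \<Longrightarrow> b' \<in> Wbasis n eps s \<Longrightarrow> \<exists>w. set w \<subseteq> L \<and> runw st w b = Some b'"
begin

abbreviation "W \<equiv> Wbasis n eps s"

definition lm :: "nat \<Rightarrow> (nat \<Rightarrow> nat) \<Rightarrow> (nat \<Rightarrow> nat) \<Rightarrow> K" where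
  "lm a b' b = (if b \<in> W \<and> b' \<in> W \<and> st a b = Some b' then coef a b else 0)"

definition mm :: "((nat \<Rightarrow> nat) \<Rightarrow> (nat \<Rightarrow> nat) \<Rightarrow> K) \<Rightarrow> ((nat \<Rightarrow> nat) \<Rightarrow> (nat \<Rightarrow> nat) \<Rightarrow> K) \<Rightarrow> (nat \<Rightarrow> nat) \<Rightarrow> (nat \<Rightarrow> nat) \<Rightarrow> K" where
  "mm A B = (\<lambda>i k. \<Sum>j\<in>W. A i j * B j k)"

definition idW :: "(nat \<Rightarrow> nat) \<Rightarrow> (nat \<Rightarrow> nat) \<Rightarrow> K" where
  "idW = (\<lambda>i k. if i = k \<and> k \<in> W then 1 else 0)"

fun wm :: "nat list \<Rightarrow> (nat \<Rightarrow> nat) \<Rightarrow> (nat \<Rightarrow> nat) \<Rightarrow> K" where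
  "wm [] = idW"
| "wm (a # w) = mm (wm w) (lm a)"

definition shw :: "nat list \<Rightarrow> nat \<Rightarrow> int" where
  "shw w = (\<lambda>q. \<Sum>a\<leftarrow>w. sh1 a q)"

definition cm :: "(nat list \<times> K) list \<Rightarrow> (nat \<Rightarrow> nat) \<Rightarrow> (nat \<Rightarrow> nat) \<Rightarrow> K" where
  "cm C = (\<lambda>i k. \<Sum>(w, c)\<leftarrow>C. c * wm w i k)"

definition cprod :: "(nat list \<times> K) list \<Rightarrow> (nat list \<times> K) list \<Rightarrow> (nat list \<times> K) list" where
  "cprod C1 C2 = concat (map (\<lambda>(w1, c1). map (\<lambda>(w2, c2). (w2 @ w1, c1 * c2)) C2) C1)"

lemma shw_append: "shw (w1 @ w2) = (\<lambda>q. shw w1 q + shw w2 q)"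
  unfolding shw_def by auto

lemma shw_Cons: "shw (a # w) = (\<lambda>q. sh1 a q + shw w q)"
  unfolding shw_def by auto

lemma run_shift: "set w \<subseteq> L \<Longrightarrow> runw st w b = Some b' \<Longrightarrow> int (b' q) = int (b q) + shw w q"
proof (induction w arbitrary: b)
  case Nil thus ?case by (simp add: shw_def)
next
  case (Cons a w)
  then obtain b1 where b1: "st a b = Some b1" "runw st w b1 = Some b'" by (auto split: option.splits)
  show ?case using Cons.IH[OF _ b1(2)] Cons.prems(1) st_shift[OF b1(1)] by (auto simp: shw_Cons)
qed

lemma run_W: "set w \<subseteq> L \<Longrightarrow> b \<in> W \<Longrightarrow> runw st w b = Some b' \<Longrightarrow> b' \<in> W"
proof (induction w arbitrary: b)
  case Nil thus ?case by simp
next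
  case (Cons a w)
  then obtain b1 where b1: "st a b = Some b1" "runw st w b1 = Some b'" by (auto split: option.splits)
  show ?case using Cons.IH[OF _ _ b1(2)] Cons.prems(1) st_W[OF b1(1)] by auto
qed

lemma loop_shw: "set w \<subseteq> L \<Longrightarrow> runw st w b = Some b \<Longrightarrow> shw w = (\<lambda>q. 0)"
  using run_shift by fastforce

lemma wm_supp: "wm w i k \<noteq> 0 \<Longrightarrow> i \<in> W \<and> k \<in> W"
proof (induction w arbitrary: i k)
  case Nil thus ?case by (auto simp: idW_def split: if_splits)
next
  case (Cons a w)
  hence "(\<Sum>j\<in>W. wm w i j * lm a j k) \<noteq> 0" by (simp add: mm_def)
  then obtain j where "j \<in> W" "wm w i j * lm a j k \<noteq> 0" by (rule sum.not_neutral_contains_not_neutral)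
  thus ?case using Cons.IH by (auto simp: lm_def split: if_splits)
qed

lemma lm_col: "st a b = Some j \<Longrightarrow> a \<in> L \<Longrightarrow> lm a j' b = (if j' = j then coef a b else 0)"
  using st_W unfolding lm_def by auto

lemma lm_col_None: "st a b = None \<Longrightarrow> lm a j' b = 0"
  unfolding lm_def by auto

lemma wm_run: "set w \<subseteq> L \<Longrightarrow> (wm w b' b \<noteq> 0 \<longleftrightarrow> b \<in> W \<and> runw st w b = Some b')"
proof (induction w arbitrary: b)
  case Nil thus ?case by (auto simp: idW_def)
next
  case (Cons a w)
  show ?case
  proof (cases "st a b")
    case None
    hence "wm (a # w) b' b = 0" by (simp add: mm_def lm_col_None)
    thus ?thesis using None by simp
  next
    case (Some j)
    have aL: "a \<in> L" using Cons.prems by simp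
    have jb: "b \<in> W" "j \<in> W" using st_W[OF Some aL] by auto
    have "wm (a # w) b' b = (\<Sum>j'\<in>W. wm w b' j' * (if j' = j then coef a b else 0))"
      by (simp add: mm_def lm_col[OF Some aL])
    also have "\<dots> = (\<Sum>j'\<in>W. if j' = j then wm w b' j * coef a b else 0)"
      by (intro sum.cong) auto
    also have "\<dots> = wm w b' j * coef a b" using jb by (simp add: sum.delta finite_Wbasis)
    finally have e: "wm (a # w) b' b = wm w b' j * coef a b" .
    have "coef a b \<noteq> 0" using coef_nz[OF Some aL] .
    hence "wm (a # w) b' b \<noteq> 0 \<longleftrightarrow> wm w b' j \<noteq> 0" using e by simp
    also have "\<dots> \<longleftrightarrow> runw st w j = Some b'" using Cons.IH[of j] Cons.prems jb by auto
    finally show ?thesis using Some jb by simp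
  qed
qed

lemma mm_assoc: "mm (mm A B) C = mm A (mm B C)"
  unfolding mm_def by (auto simp: fun_eq_iff sum_distrib_left sum_distrib_right mult.assoc intro: sum.swap)

lemma mm_idW_right: assumes "\<And>i k. A i k \<noteq> 0 \<Longrightarrow> k \<in> W" shows "mm A idW = A"
proof (intro ext)
  fix i k
  have "mm A idW i k = (\<Sum>j\<in>W. if j = k then (if k \<in> W then A i k else 0) else 0)"
    unfolding mm_def idW_def by (intro sum.cong) auto
  also have "\<dots> = A i k" using assms by (auto simp: sum.delta finite_Wbasis)
  finally show "mm A idW i k = A i k" .
qed

lemma mm_idW_left: assumes "\<And>i k. A i k \<noteq> 0 \<Longrightarrow> i \<in> W" shows "mm idW A = A"
proof (intro ext)
  fix i k
  have "mm idW A i k = (\<Sum>j\<in>W. if j = i then (if i \<in> W then A i k else 0) else 0)"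
    unfolding mm_def idW_def by (intro sum.cong) auto
  also have "\<dots> = A i k" using assms by (auto simp: sum.delta finite_Wbasis)
  finally show "mm idW A i k = A i k" .
qed

lemma wm_append: "wm (w1 @ w2) = mm (wm w2) (wm w1)"
proof (induction w1)
  case Nil thus ?case using wm_supp by (simp add: mm_idW_right)
next
  case (Cons a w1) thus ?case by (simp add: mm_assoc)
qed

lemma cm_cprod: "cm (cprod C1 C2) = mm (cm C1) (cm C2)"
proof (intro ext)
  fix i k
  have "mm (cm C1) (cm C2) i k = (\<Sum>j\<in>W. (\<Sum>p\<leftarrow>C1. snd p * wm (fst p) i j) * (\<Sum>q\<leftarrow>C2. snd q * wm (fst q) j k))"
    unfolding mm_def cm_def by (simp add: case_prod_unfold)
  also have "\<dots> = (\<Sum>j\<in>W. \<Sum>p\<leftarrow>C1. (snd p * wm (fst p) i j) * (\<Sum>q\<leftarrow>C2. snd q * wm (fst q) j k))"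
    by (simp only: sum_list_mult_right)
  also have "\<dots> = (\<Sum>j\<in>W. \<Sum>p\<leftarrow>C1. \<Sum>q\<leftarrow>C2. (snd p * wm (fst p) i j) * (snd q * wm (fst q) j k))"
    by (simp only: sum_list_mult_left)
  also have "\<dots> = (\<Sum>p\<leftarrow>C1. \<Sum>j\<in>W. \<Sum>q\<leftarrow>C2. (snd p * wm (fst p) i j) * (snd q * wm (fst q) j k))"
    by (simp only: sum_list_swap_sum)
  also have "\<dots> = (\<Sum>p\<leftarrow>C1. \<Sum>q\<leftarrow>C2. \<Sum>j\<in>W. (snd p * wm (fst p) i j) * (snd q * wm (fst q) j k))"
    by (simp only: sum_list_swap_sum)
  also have "\<dots> = (\<Sum>p\<leftarrow>C1. \<Sum>q\<leftarrow>C2. (snd p * snd q) * wm (fst q @ fst p) i k)"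
    by (simp add: wm_append mm_def sum_distrib_left mult_ac)
  also have "\<dots> = cm (cprod C1 C2) i k"
    unfolding cm_def cprod_def by (simp add: sum_list_map_concat comp_def case_prod_unfold)
  finally show "cm (cprod C1 C2) i k = mm (cm C1) (cm C2) i k" by simp
qed

lemma cm_single: "cm [(w, c)] = (\<lambda>i k. c * wm w i k)"
  unfolding cm_def by simp

lemma cprod_words: "p \<in> set (cprod C1 C2) \<Longrightarrow> \<exists>w1 c1 w2 c2. (w1, c1) \<in> set C1 \<and> (w2, c2) \<in> set C2 \<and> fst p = w2 @ w1"
  unfolding cprod_def by (auto; blast)


lemma wm_diag_loop: "set w \<subseteq> L \<Longrightarrow> shw w = (\<lambda>q. 0) \<Longrightarrow> wm w i k \<noteq> 0 \<Longrightarrow> i = k"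
proof -
  assume w: "set w \<subseteq> L" "shw w = (\<lambda>q. 0)" "wm w i k \<noteq> 0"
  hence r: "runw st w k = Some i" using wm_run by blast
  have "\<forall>q. int (i q) = int (k q)" using run_shift[OF w(1) r] w(2) by simp
  thus "i = k" by (auto simp: fun_eq_iff)
qed

lemma kill_lemma:
  assumes bW: "b \<in> W" and bsW: "bs \<in> W" and btW: "bt \<in> W"
    and u: "set u \<subseteq> L" "runw st u b = Some bs" and v: "set v \<subseteq> L" "runw st v bs = Some b"
    and q: "int (bt q) + int (bs q) - int (b q) < 0 \<or> (q \<in> {1..n} \<and> eps q \<and> int (bt q) + int (bs q) - int (b q) > 1)"
  shows "set (u @ v) \<subseteq> L \<and> shw (u @ v) = (\<lambda>q. 0) \<and> runw st (u @ v) b = Some b \<and> runw st (u @ v) bt = None"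
proof -
  have r: "runw st (u @ v) b = Some b" using u v by (simp add: runw_append)
  have L: "set (u @ v) \<subseteq> L" using u v by auto
  have sh0: "shw (u @ v) = (\<lambda>q. 0)" using loop_shw[OF L r] .
  have shu: "shw u q = int (bs q) - int (b q)" using run_shift[OF u] by simp
  have "runw st u bt = None"
  proof (rule ccontr)
    assume "runw st u bt \<noteq> None"
    then obtain z where z: "runw st u bt = Some z" by auto
    have zW: "z \<in> W" using run_W[OF u(1) btW z] .
    have "int (z q) = int (bt q) + int (bs q) - int (b q)" using run_shift[OF u(1) z] shu by simp
    thus False using q Zplus_eps[OF Wbasis_Zplus[OF zW]] by fastforce
  qed
  hence "runw st (u @ v) bt = None" by (simp add: runw_append)
  thus ?thesis using r L sh0 by simp
qed

lemma separation:
  assumes bW: "b \<in> W" and btW: "bt \<in> W" and ne: "b \<noteq> bt"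
  shows "\<exists>w. set w \<subseteq> L \<and> shw w = (\<lambda>q. 0) \<and>
     ((runw st w b = Some b \<and> runw st w bt = None) \<or> (runw st w bt = Some bt \<and> runw st w b = None))"
proof (cases "\<exists>q\<in>{1..n}. eps q \<and> b q \<noteq> bt q")
  case True
  then obtain q where q: "q \<in> {1..n}" "eps q" "b q \<noteq> bt q" by blast
  have le: "b q \<le> 1" "bt q \<le> 1" using Zplus_eps[OF Wbasis_Zplus[OF bW] q(1,2)] Zplus_eps[OF Wbasis_Zplus[OF btW] q(1,2)] by auto
  show ?thesis
  proof (cases "b q = 0")
    case True
    hence btq: "bt q = 1" using le q(3) by auto
    obtain u where u: "set u \<subseteq> L" "runw st u b = Some bt" using conn[OF bW btW] by blast
    obtain v where v: "set v \<subseteq> L" "runw st v bt = Some b" using conn[OF btW bW] by blast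
    have "set (u @ v) \<subseteq> L \<and> shw (u @ v) = (\<lambda>q. 0) \<and> runw st (u @ v) b = Some b \<and> runw st (u @ v) bt = None"
      by (rule kill_lemma[OF bW btW btW u v, of q]) (use q True btq in auto)
    thus ?thesis by blast
  next
    case False
    hence bq: "b q = 1" "bt q = 0" using le q(3) by auto
    obtain u where u: "set u \<subseteq> L" "runw st u bt = Some b" using conn[OF btW bW] by blast
    obtain v where v: "set v \<subseteq> L" "runw st v b = Some bt" using conn[OF bW btW] by blast
    have "set (u @ v) \<subseteq> L \<and> shw (u @ v) = (\<lambda>q. 0) \<and> runw st (u @ v) bt = Some bt \<and> runw st (u @ v) b = None"
      by (rule kill_lemma[OF btW bW bW u v, of q]) (use q bq in auto)
    thus ?thesis by blast
  qed
next
  case False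
  hence epsq: "\<And>q. q \<in> {1..n} \<Longrightarrow> eps q \<Longrightarrow> b q = bt q" by blast
  obtain q where q: "q \<in> {1..n}" "bt q < b q" using W_exists_gt[OF bW btW ne] by blast
  have nq: "\<not> eps q" using epsq[OF q(1)] q(2) by auto
  obtain r where r: "r \<in> {1..n}" "r \<noteq> q" "\<not> eps r"
  proof (rule ccontr)
    assume "\<not> thesis"
    hence allr: "\<And>r. r \<in> {1..n} \<Longrightarrow> r \<noteq> q \<Longrightarrow> b r = bt r" using that epsq by blast
    have "(\<Sum>i=1..n. b i) = b q + (\<Sum>i\<in>{1..n}-{q}. b i)" using q(1) by (simp add: sum.remove)
    moreover have "(\<Sum>i=1..n. bt i) = bt q + (\<Sum>i\<in>{1..n}-{q}. bt i)" using q(1) by (simp add: sum.remove)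
    moreover have "(\<Sum>i\<in>{1..n}-{q}. b i) = (\<Sum>i\<in>{1..n}-{q}. bt i)" using allr by (intro sum.cong) auto
    moreover have "(\<Sum>i=1..n. b i) = (\<Sum>i=1..n. bt i)" using Wbasis_sum bW btW by metis
    ultimately show False using q(2) by linarith
  qed
  define bs where "bs = (\<lambda>p. if p = r then s else (0::nat))"
  have bsW: "bs \<in> W"
  proof -
    have "bs \<in> Zplus n eps" unfolding Zplus_def bs_def using r by auto
    moreover have "(\<Sum>i=1..n. bs i) = s" unfolding bs_def using r(1) by (simp add: sum.delta)
    ultimately show ?thesis unfolding Wbasis_def by simp
  qed
  obtain u where u: "set u \<subseteq> L" "runw st u b = Some bs" using conn[OF bW bsW] by blast
  obtain v where v: "set v \<subseteq> L" "runw st v bs = Some b" using conn[OF bsW bW] by blast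
  have "set (u @ v) \<subseteq> L \<and> shw (u @ v) = (\<lambda>q. 0) \<and> runw st (u @ v) b = Some b \<and> runw st (u @ v) bt = None"
    by (rule kill_lemma[OF bW bsW btW u v, of q]) (use q r in \<open>auto simp: bs_def\<close>)
  thus ?thesis by blast
qed

definition isdiag :: "((nat \<Rightarrow> nat) \<Rightarrow> (nat \<Rightarrow> nat) \<Rightarrow> K) \<Rightarrow> bool" where
  "isdiag D \<longleftrightarrow> (\<forall>i k. D i k \<noteq> 0 \<longrightarrow> i = k \<and> k \<in> W)"

lemma mm_diag: "isdiag D1 \<Longrightarrow> isdiag D2 \<Longrightarrow> mm D1 D2 i k = (if i = k then D1 i i * D2 i i else 0)"
proof -
  assume d: "isdiag D1" "isdiag D2"
  have "mm D1 D2 i k = (\<Sum>j\<in>W. if j = i then (if i = k then D1 i i * D2 i i else 0) else 0)"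
    unfolding mm_def
  proof (intro sum.cong refl)
    fix j assume "j \<in> W"
    show "D1 i j * D2 j k = (if j = i then (if i = k then D1 i i * D2 i i else 0) else 0)"
      using d unfolding isdiag_def by (cases "D1 i j = 0"; cases "D2 j k = 0") auto
  qed
  also have "\<dots> = (if i \<in> W then (if i = k then D1 i i * D2 i i else 0) else 0)"
    by (simp add: sum.delta finite_Wbasis)
  also have "\<dots> = (if i = k then D1 i i * D2 i i else 0)"
    using d unfolding isdiag_def by auto
  finally show ?thesis .
qed

lemma isdiag_mm: "isdiag D1 \<Longrightarrow> isdiag D2 \<Longrightarrow> isdiag (mm D1 D2)"
  using mm_diag unfolding isdiag_def by (auto split: if_splits)

lemma proj_aux:
  assumes bW: "b \<in> W"
  shows "finite A \<Longrightarrow> A \<subseteq> W - {b} \<Longrightarrow> \<exists>C. isdiag (cm C) \<and> cm C b b = 1 \<and> (\<forall>x\<in>A. cm C x x = 0)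
    \<and> (\<forall>p\<in>set C. set (fst p) \<subseteq> L \<and> shw (fst p) = (\<lambda>q. 0))"
proof (induction A rule: finite_induct)
  case empty
  have "cm [([], 1)] = idW" by (simp add: cm_def)
  moreover have "isdiag idW" unfolding isdiag_def idW_def by auto
  ultimately show ?case using bW by (intro exI[of _ "[([], 1)]"]) (auto simp: idW_def shw_def)
next
  case (insert x A)
  then obtain C where C: "isdiag (cm C)" "cm C b b = 1" "\<forall>y\<in>A. cm C y y = 0"
    "\<forall>p\<in>set C. set (fst p) \<subseteq> L \<and> shw (fst p) = (\<lambda>q. 0)" by auto
  have xW: "x \<in> W" "x \<noteq> b" using insert.prems by auto
  obtain w where w: "set w \<subseteq> L" "shw w = (\<lambda>q. 0)"
    "(runw st w b = Some b \<and> runw st w x = None) \<or> (runw st w x = Some x \<and> runw st w b = None)"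
    using separation[OF bW xW(1) xW(2)[symmetric]] by blast
  define l1 where "l1 = wm w b b"
  define l2 where "l2 = wm w x x"
  have l12: "l1 \<noteq> l2" using w(3) wm_run[OF w(1), of b b] wm_run[OF w(1), of x x] bW xW(1)
    unfolding l1_def l2_def by auto
  have nz: "l1 - l2 \<noteq> 0" using l12 by simp
  define c where "c = inverse (l1 - l2)"
  define Q where "Q = [(w, c), ([], - l2 * c)]"
  have cmQ: "cm Q = (\<lambda>i k. c * wm w i k + (- l2 * c) * idW i k)"
    unfolding Q_def cm_def by (simp add: fun_eq_iff)
  have dQ: "isdiag (cm Q)" unfolding isdiag_def cmQ
    using wm_diag_loop[OF w(1,2)] wm_supp by (auto simp: idW_def split: if_splits)
  have Qb: "cm Q b b = 1"
  proof -
    have "cm Q b b = c * (l1 - l2)" unfolding cmQ idW_def l1_def[symmetric] using bW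
      by (simp add: algebra_simps)
    thus ?thesis using nz unfolding c_def by simp
  qed
  have Qx: "cm Q x x = 0" unfolding cmQ using xW by (simp add: l2_def[symmetric] idW_def algebra_simps)
  define C' where "C' = cprod C Q"
  have cmC': "cm C' = mm (cm C) (cm Q)" unfolding C'_def by (rule cm_cprod)
  have "isdiag (cm C')" unfolding cmC' using isdiag_mm[OF C(1) dQ] .
  moreover have "cm C' b b = 1" unfolding cmC' mm_diag[OF C(1) dQ] using C(2) Qb by simp
  moreover have "\<forall>y\<in>insert x A. cm C' y y = 0" unfolding cmC' mm_diag[OF C(1) dQ] using C(3) Qx by auto
  moreover have "\<forall>p\<in>set C'. set (fst p) \<subseteq> L \<and> shw (fst p) = (\<lambda>q. 0)"
  proof
    fix p assume "p \<in> set C'"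
    then obtain w1 c1 w2 c2 where "(w1, c1) \<in> set C" "(w2, c2) \<in> set Q" "fst p = w2 @ w1"
      using cprod_words[of p C Q] unfolding C'_def by blast
    moreover have "set w2 \<subseteq> L \<and> shw w2 = (\<lambda>q. 0)" if "(w2, c2) \<in> set Q" for c2
      using that w(1,2) unfolding Q_def by (auto simp: shw_def)
    ultimately show "set (fst p) \<subseteq> L \<and> shw (fst p) = (\<lambda>q. 0)"
      using C(4) by (force simp: shw_append)
  qed
  ultimately show ?case by blast
qed

lemma proj:
  assumes bW: "b \<in> W"
  shows "\<exists>C. (\<forall>i k. cm C i k = (if i = b \<and> k = b then 1 else 0)) \<and> (\<forall>p\<in>set C. set (fst p) \<subseteq> L \<and> shw (fst p) = (\<lambda>q. 0))"
proof -
  obtain C where C: "isdiag (cm C)" "cm C b b = 1" "\<forall>x\<in>W - {b}. cm C x x = 0"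
    "\<forall>p\<in>set C. set (fst p) \<subseteq> L \<and> shw (fst p) = (\<lambda>q. 0)"
    using proj_aux[OF bW, of "W - {b}"] finite_Wbasis by auto
  have "\<forall>i k. cm C i k = (if i = b \<and> k = b then 1 else 0)"
  proof (intro allI)
    fix i k
    show "cm C i k = (if i = b \<and> k = b then 1 else 0)"
    proof (cases "cm C i k = 0")
      case True thus ?thesis using C(2) by auto
    next
      case False
      hence "i = k" "k \<in> W" using C(1) unfolding isdiag_def by auto
      thus ?thesis using C(2,3) False by auto
    qed
  qed
  thus ?thesis using C(4) by blast
qed

lemma unit_combo:
  assumes bW: "b \<in> W" and b'W: "b' \<in> W"
  shows "\<exists>C. (\<forall>i k. cm C i k = (if i = b' \<and> k = b then 1 else 0)) \<and>
     (\<forall>p\<in>set C. set (fst p) \<subseteq> L \<and> shw (fst p) = (\<lambda>q. int (b' q) - int (b q)))"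
proof -
  obtain u where u: "set u \<subseteq> L" "runw st u b = Some b'" using conn[OF bW b'W] by blast
  define l where "l = wm u b' b"
  have l: "l \<noteq> 0" using wm_run[OF u(1)] u(2) bW unfolding l_def by auto
  obtain P where P: "\<forall>i k. cm P i k = (if i = b \<and> k = b then 1 else 0)"
    "\<forall>p\<in>set P. set (fst p) \<subseteq> L \<and> shw (fst p) = (\<lambda>q. 0)" using proj[OF bW] by blast
  define C where "C = cprod [(u, 1 / l)] P"
  have "\<forall>i k. cm C i k = (if i = b' \<and> k = b then 1 else 0)"
  proof (intro allI)
    fix i k
    have "cm C i k = (\<Sum>j\<in>W. (1 / l * wm u i j) * (if j = b \<and> k = b then 1 else 0))"
      unfolding C_def cm_cprod mm_def cm_single using P(1) by simp
    also have "\<dots> = (\<Sum>j\<in>W. if j = b then (if k = b then 1 / l * wm u i b else 0) else 0)"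
      by (intro sum.cong) auto
    also have "\<dots> = (if k = b then 1 / l * wm u i b else 0)" using bW by (simp add: sum.delta finite_Wbasis)
    also have "\<dots> = (if i = b' \<and> k = b then 1 else 0)"
    proof (cases "i = b'")
      case True thus ?thesis using l unfolding l_def by simp
    next
      case False
      hence "wm u i b = 0" using wm_run[OF u(1), of i b] u(2) by auto
      thus ?thesis using False by simp
    qed
    finally show "cm C i k = (if i = b' \<and> k = b then 1 else 0)" .
  qed
  moreover have "\<forall>p\<in>set C. set (fst p) \<subseteq> L \<and> shw (fst p) = (\<lambda>q. int (b' q) - int (b q))"
  proof
    fix p assume "p \<in> set C"
    then obtain w1 c1 w2 c2 where "(w1, c1) \<in> set [(u, 1 / l)]" "(w2, c2) \<in> set P" "fst p = w2 @ w1"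
      using cprod_words[of p "[(u, 1 / l)]" P] unfolding C_def by blast
    moreover have "shw u = (\<lambda>q. int (b' q) - int (b q))" using run_shift[OF u] by (auto simp: fun_eq_iff)
    ultimately show "set (fst p) \<subseteq> L \<and> shw (fst p) = (\<lambda>q. int (b' q) - int (b q))"
      using P(2) u(1) by (force simp: shw_append)
  qed
  ultimately show ?thesis by blast
qed

end




lemma monoact_E: "2 \<le> n \<Longrightarrow> monoact n eps s (stepE n eps s) (coefE n) (alphaE n) {..<n}"
  by unfold_locales (auto dest: stepE_W stepE_shift coefE_nz intro: connE)

lemma monoact_F: "2 \<le> n \<Longrightarrow> monoact n eps s (stepF n eps s) (coefF n) (\<lambda>i q. - alphaE n i q) {..<n}"
  by unfold_locales (auto dest: stepF_W stepF_shift coefF_nz intro: connF)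

lemma lmE: assumes n: "2 \<le> n" and i: "i < n" shows "monoact.lm n eps s (stepE n eps s) (coefE n) i = Emat n eps s 1 i"
  using stepE_W[OF _ n i] by (auto simp: fun_eq_iff monoact.lm_def[OF monoact_E[OF n]] Emat_step)

lemma lmF: assumes n: "2 \<le> n" and i: "i < n" shows "monoact.lm n eps s (stepF n eps s) (coefF n) i = Fmat n eps s 1 i"
  using stepF_W[OF _ n i] by (auto simp: fun_eq_iff monoact.lm_def[OF monoact_F[OF n]] Fmat_step)

definition gmm :: "'i set \<Rightarrow> ('i \<Rightarrow> 'i \<Rightarrow> 'a::comm_semiring_1) \<Rightarrow> ('i \<Rightarrow> 'i \<Rightarrow> 'a) \<Rightarrow> 'i \<Rightarrow> 'i \<Rightarrow> 'a" where
  "gmm I A B = (\<lambda>i k. \<Sum>j\<in>I. A i j * B j k)"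

definition gid :: "'i set \<Rightarrow> 'i \<Rightarrow> 'i \<Rightarrow> 'a::comm_semiring_1" where
  "gid I = (\<lambda>i k. if i = k \<and> k \<in> I then 1 else 0)"

fun gwm :: "'i set \<Rightarrow> ('l \<Rightarrow> 'i \<Rightarrow> 'i \<Rightarrow> 'a::comm_semiring_1) \<Rightarrow> 'l list \<Rightarrow> 'i \<Rightarrow> 'i \<Rightarrow> 'a" where
  "gwm I M [] = gid I"
| "gwm I M (a # w) = gmm I (gwm I M w) (M a)"

definition gcm :: "'i set \<Rightarrow> ('l \<Rightarrow> 'i \<Rightarrow> 'i \<Rightarrow> 'a::comm_semiring_1) \<Rightarrow> (K \<Rightarrow> 'a) \<Rightarrow> ('l list \<times> K) list \<Rightarrow> 'i \<Rightarrow> 'i \<Rightarrow> 'a" where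
  "gcm I M emb C = (\<lambda>i k. \<Sum>p\<leftarrow>C. emb (snd p) * gwm I M (fst p) i k)"

lemma (in comm_ring_hom) hom_gwm: "hom (gwm I M w i k) = gwm I (\<lambda>a i k. hom (M a i k)) w i k"
proof (induction w arbitrary: i k)
  case Nil thus ?case by (simp add: gid_def)
next
  case (Cons a w) thus ?case by (simp add: gmm_def hom_distribs)
qed

lemma (in comm_ring_hom) hom_gcm: "hom (gcm I M emb C i k) = gcm I (\<lambda>a i k. hom (M a i k)) (\<lambda>c. hom (emb c)) C i k"
  unfolding gcm_def hom_sum_list by (simp add: hom_distribs hom_gwm comp_def)

lemma gwm_cong: "(\<And>a i k. a \<in> set w \<Longrightarrow> M a i k = M' a i k) \<Longrightarrow> gwm I M w = gwm I M' w"
  by (induction w) (auto simp: gmm_def)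

lemma gmm_assoc: "finite I \<Longrightarrow> gmm I (gmm I A B) C = gmm I A (gmm I B C)"
  unfolding gmm_def by (auto simp: fun_eq_iff sum_distrib_left sum_distrib_right mult.assoc intro: sum.swap)

lemma gmm_gid_right: "finite I \<Longrightarrow> k \<in> I \<Longrightarrow> gmm I A (gid I) i k = A i k"
proof -
  assume I: "finite I" "k \<in> I"
  have "gmm I A (gid I) i k = (\<Sum>j\<in>I. if j = k then A i k else 0)"
    unfolding gmm_def gid_def by (intro sum.cong) auto
  thus ?thesis using I by simp
qed

lemma gwm_append_aux: "finite I \<Longrightarrow> k \<in> I \<Longrightarrow> gwm I M (w1 @ w2) i k = gmm I (gwm I M w2) (gwm I M w1) i k"
proof (induction w1 arbitrary: i k)
  case Nil thus ?case by (simp add: gmm_gid_right)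
next
  case (Cons a w1)
  have "gwm I M ((a # w1) @ w2) i k = (\<Sum>j\<in>I. gwm I M (w1 @ w2) i j * M a j k)" by (simp add: gmm_def)
  also have "\<dots> = (\<Sum>j\<in>I. gmm I (gwm I M w2) (gwm I M w1) i j * M a j k)"
    using Cons.IH[OF Cons.prems(1)] by (intro sum.cong) auto
  also have "\<dots> = gmm I (gmm I (gwm I M w2) (gwm I M w1)) (M a) i k" by (simp add: gmm_def)
  also have "\<dots> = gmm I (gwm I M w2) (gwm I M (a # w1)) i k" by (simp add: gmm_assoc[OF Cons.prems(1)])
  finally show ?case .
qed

section \<open>Closure of invariant subspaces\<close>

definition closedS :: "'b set \<Rightarrow> ('b \<Rightarrow> K) set \<Rightarrow> ('b \<Rightarrow> 'b \<Rightarrow> K) \<Rightarrow> bool" where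
  "closedS B S M \<longleftrightarrow> (\<forall>v\<in>S. mat_apply B M v \<in> S)"

context
  fixes B :: "'b set" and Ms S
  assumes inv: "invariant_subspace B Ms S" and finB: "finite B"
begin

lemma S_sub: "S \<subseteq> Vspace B" and S_0: "(\<lambda>_. 0) \<in> S" and S_add: "u \<in> S \<Longrightarrow> v \<in> S \<Longrightarrow> (\<lambda>b. u b + v b) \<in> S"
  and S_smult: "u \<in> S \<Longrightarrow> (\<lambda>b. c * u b) \<in> S" and S_gen: "M \<in> Ms \<Longrightarrow> u \<in> S \<Longrightarrow> mat_apply B M u \<in> S"
  using inv unfolding invariant_subspace_def by auto

lemma S_sum: "finite A \<Longrightarrow> (\<And>j. j \<in> A \<Longrightarrow> f j \<in> S) \<Longrightarrow> (\<lambda>b. \<Sum>j\<in>A. f j b) \<in> S"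
proof (induction A rule: finite_induct)
  case empty thus ?case using S_0 by simp
next
  case (insert x A)
  have "(\<lambda>b. \<Sum>j\<in>insert x A. f j b) = (\<lambda>b. f x b + (\<Sum>j\<in>A. f j b))" using insert.hyps by simp
  thus ?case using S_add insert by simp
qed

lemma closed_gen: "M \<in> Ms \<Longrightarrow> closedS B S M"
  unfolding closedS_def using S_gen by blast

lemma closed_smult: "closedS B S M \<Longrightarrow> closedS B S (\<lambda>i k. c * M i k)"
proof -
  assume M: "closedS B S M"
  have "mat_apply B (\<lambda>i k. c * M i k) v = (\<lambda>b. c * mat_apply B M v b)" for v
    unfolding mat_apply_def by (auto simp: sum_distrib_left mult_ac)
  thus ?thesis using M S_smult unfolding closedS_def by simp
qed

lemma closed_add: "closedS B S M1 \<Longrightarrow> closedS B S M2 \<Longrightarrow> closedS B S (\<lambda>i k. M1 i k + M2 i k)"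
proof -
  assume M: "closedS B S M1" "closedS B S M2"
  have "mat_apply B (\<lambda>i k. M1 i k + M2 i k) v = (\<lambda>b. mat_apply B M1 v b + mat_apply B M2 v b)" for v
    unfolding mat_apply_def by (auto simp: sum.distrib distrib_right)
  thus ?thesis using M S_add unfolding closedS_def by simp
qed

lemma closed_zero: "closedS B S (\<lambda>i k. 0)"
proof -
  have "mat_apply B (\<lambda>i k. 0) v = (\<lambda>_. 0)" for v unfolding mat_apply_def by auto
  thus ?thesis using S_0 unfolding closedS_def by simp
qed

lemma closed_sum_list: "(\<And>x. x \<in> set xs \<Longrightarrow> closedS B S (f x)) \<Longrightarrow> closedS B S (\<lambda>i k. \<Sum>x\<leftarrow>xs. f x i k)"
  by (induction xs) (auto intro: closed_zero closed_add)

lemma closed_sum: "finite A \<Longrightarrow> (\<And>x. x \<in> A \<Longrightarrow> closedS B S (f x)) \<Longrightarrow> closedS B S (\<lambda>i k. \<Sum>x\<in>A. f x i k)"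
proof (induction A rule: finite_induct)
  case empty thus ?case using closed_zero by simp
next
  case (insert x A) thus ?case using closed_add[of "f x" "\<lambda>i k. \<Sum>x\<in>A. f x i k"] by simp
qed

lemma closed_gmm: "closedS B S M1 \<Longrightarrow> closedS B S M2 \<Longrightarrow> closedS B S (gmm B M1 M2)"
proof -
  assume M: "closedS B S M1" "closedS B S M2"
  have "mat_apply B (gmm B M1 M2) v = mat_apply B M1 (mat_apply B M2 v)" for v
    unfolding mat_apply_def gmm_def
    by (auto simp: fun_eq_iff sum_distrib_left sum_distrib_right mult_ac intro: sum.swap)
  thus ?thesis using M unfolding closedS_def by simp
qed

lemma closed_gid: "closedS B S (gid B)"
proof -
  have "mat_apply B (gid B) v = v" if "v \<in> S" for v
  proof (intro ext)
    fix b
    have vV: "v \<in> Vspace B" using S_sub that by auto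
    show "mat_apply B (gid B) v b = v b"
    proof (cases "b \<in> B")
      case True
      have "(\<Sum>b'\<in>B. gid B b b' * v b') = (\<Sum>b'\<in>B. if b' = b then v b else 0)"
        unfolding gid_def by (intro sum.cong) auto
      thus ?thesis using True finB unfolding mat_apply_def by simp
    next
      case False thus ?thesis using vV unfolding mat_apply_def Vspace_def by auto
    qed
  qed
  thus ?thesis unfolding closedS_def by simp
qed

lemma closed_gwm: "(\<And>a. a \<in> set w \<Longrightarrow> closedS B S (M a)) \<Longrightarrow> closedS B S (gwm B M w)"
  by (induction w) (auto intro: closed_gid closed_gmm)

lemma closed_gcm: "(\<And>a p. p \<in> set C \<Longrightarrow> a \<in> set (fst p) \<Longrightarrow> closedS B S (M a)) \<Longrightarrow> closedS B S (gcm B M (\<lambda>c. c) C)"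
  unfolding gcm_def by (intro closed_sum_list closed_smult closed_gwm) auto

end




datatype tlet = LE nat | LF nat

definition TM :: "nat \<Rightarrow> (nat \<Rightarrow> bool) \<Rightarrow> nat \<Rightarrow> nat \<Rightarrow> K \<Rightarrow> K \<Rightarrow> tlet \<Rightarrow> tb \<Rightarrow> tb \<Rightarrow> K" where
  "TM n eps l m x y a = (case a of LE i \<Rightarrow> TEmat n eps l m x y i
     | LF i \<Rightarrow> (\<lambda>u' u. (if i = 0 then x * y else 1) * TFmat n eps l m x y i u' u))"

definition cK :: "K \<Rightarrow> K poly poly" where "cK c = [:[:c:]:]"
definition cX :: "K poly poly" where "cX = [:[:0, 1:]:]"
definition cY :: "K poly poly" where "cY = [:0, 1:]"

definition SM :: "nat \<Rightarrow> (nat \<Rightarrow> bool) \<Rightarrow> nat \<Rightarrow> nat \<Rightarrow> tlet \<Rightarrow> tb \<Rightarrow> tb \<Rightarrow> K poly poly" where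
  "SM n eps l m a = (case a of
     LE i \<Rightarrow> (\<lambda>u' u. cK (Emat n eps l 1 i (fst u') (fst u) * (if snd u' = snd u then 1 else 0)) * (if i = 0 then cX else 1)
       + cK ((if fst u' = fst u then inverse (kval n eps i (fst u)) else 0) * Emat n eps m 1 i (snd u') (snd u)) * (if i = 0 then cY else 1))
   | LF i \<Rightarrow> (\<lambda>u' u. cK (Fmat n eps l 1 i (fst u') (fst u) * (if snd u' = snd u then kval n eps i (snd u) else 0)) * (if i = 0 then cY else 1)
       + cK ((if fst u' = fst u then 1 else 0) * Fmat n eps m 1 i (snd u') (snd u)) * (if i = 0 then cX else 1)))"

definition ev :: "K \<Rightarrow> K \<Rightarrow> K poly poly \<Rightarrow> K" where
  "ev x y P = poly (map_poly (\<lambda>c. poly c x) P) y"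

lemma ev_hom: "comm_ring_hom (ev x y)"
proof -
  interpret mh: map_poly_comm_ring_hom "\<lambda>c::K poly. poly c x" ..
  show ?thesis unfolding ev_def by unfold_locales (simp_all add: mh.hom_add mh.hom_mult)
qed

lemma ev_cK[simp]: "ev x y (cK c) = c" unfolding ev_def cK_def by (cases "c = 0") (simp_all add: map_poly_pCons)
lemma ev_cX[simp]: "ev x y cX = x" unfolding ev_def cX_def by (simp add: map_poly_pCons)
lemma ev_cY[simp]: "ev x y cY = y" unfolding ev_def cY_def by (simp add: map_poly_pCons)

lemma Emat_x: "Emat n eps s x i b' b = (if i = 0 then x else 1) * Emat n eps s 1 i b' b"
  unfolding Emat_step by auto

lemma Fmat_x: "Fmat n eps s x i b' b = (if i = 0 then inverse x else 1) * Fmat n eps s 1 i b' b"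
  unfolding Fmat_step by auto

lemma ev_SM: assumes "x \<noteq> 0" "y \<noteq> 0" shows "ev x y (SM n eps l m a u' u) = TM n eps l m x y a u' u"
proof -
  interpret h: comm_ring_hom "ev x y" by (rule ev_hom)
  show ?thesis
  proof (cases a)
    case (LE i)
    thus ?thesis unfolding SM_def TM_def TEmat_def
      by (simp add: h.hom_add h.hom_mult Emat_x[of n eps l x] Emat_x[of n eps m y] mult_ac)
  next
    case (LF i)
    thus ?thesis unfolding SM_def TM_def TFmat_def using assms
      by (simp add: h.hom_add h.hom_mult Fmat_x[of n eps l x] Fmat_x[of n eps m y] field_simps)
  qed
qed


section \<open>The degeneration\<close>

type_synonym F = "K poly fract"

definition sF :: F where "sF = Fract [:0, 1:] 1"
definition eF :: "K poly \<Rightarrow> F" where "eF p = Fract p 1"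
definition phi :: "nat \<Rightarrow> K poly poly \<Rightarrow> F" where
  "phi n P = poly (map_poly (\<lambda>c. eF [:poly c 1:]) P) (sF ^ n)"

lemma eF_0[simp]: "eF 0 = 0" unfolding eF_def by (simp add: Zero_fract_def[where 'a="K poly"])
lemma eF_1[simp]: "eF 1 = 1" unfolding eF_def by (simp add: One_fract_def[where 'a="K poly"])
lemma eF_add: "eF (a + b) = eF a + eF b" unfolding eF_def by simp
lemma eF_mult: "eF (a * b) = eF a * eF b" unfolding eF_def by simp
lemma eF_eq0[simp]: "eF a = 0 \<longleftrightarrow> a = 0"
proof -
  have "eF a = eF 0 \<longleftrightarrow> a = 0" unfolding eF_def by (simp add: eq_fract)
  thus ?thesis by simp
qed

lemma sF_eF: "sF = eF [:0, 1:]" unfolding sF_def eF_def ..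
lemma sF_nz[simp]: "sF \<noteq> 0" unfolding sF_eF by simp

lemma eF_hom: "comm_ring_hom eF"
  by unfold_locales (simp_all add: eF_add eF_mult)

lemma cF_hom: "comm_ring_hom (\<lambda>c::K poly. eF [:poly c 1:])"
proof unfold_locales
  fix x y :: "K poly"
  show "eF [:poly (x + y) 1:] = eF [:poly x 1:] + eF [:poly y 1:]" by (simp add: eF_add[symmetric])
  have e: "[:poly (x * y) 1:] = [:poly x 1:] * [:poly y 1:]" by simp
  show "eF [:poly (x * y) 1:] = eF [:poly x 1:] * eF [:poly y 1:]" unfolding e eF_mult ..
next
  show "eF [:poly 0 1:] = 0" by simp
  show "eF [:poly 1 1:] = 1" by (simp add: one_pCons[symmetric])
qed

lemma phi_hom: "comm_ring_hom (phi n)"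
proof -
  interpret c: comm_ring_hom "\<lambda>c::K poly. eF [:poly c 1:]" by (rule cF_hom)
  interpret mh: map_poly_comm_ring_hom "\<lambda>c::K poly. eF [:poly c 1:]" ..
  show ?thesis unfolding phi_def by unfold_locales (simp_all add: mh.hom_add mh.hom_mult)
qed

lemma phi_cK[simp]: "phi n (cK c) = eF [:c:]"
  unfolding phi_def cK_def by (cases "c = 0") (simp_all add: map_poly_pCons)
lemma phi_cX[simp]: "phi n cX = 1"
  unfolding phi_def cX_def by (simp add: map_poly_pCons one_pCons[symmetric])
lemma phi_cY[simp]: "phi n cY = sF ^ n"
  unfolding phi_def cY_def by (simp add: map_poly_pCons one_pCons[symmetric])

lemma eF_s: "eF [:0, c:] = sF * eF [:c:]"
proof -
  have "[:0, c:] = [:0, 1:] * [:c:]" by simp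
  thus ?thesis unfolding sF_eF by (simp only: eF_mult)
qed

definition G :: "nat \<Rightarrow> (nat \<Rightarrow> bool) \<Rightarrow> nat \<Rightarrow> nat \<Rightarrow> tlet \<Rightarrow> tb \<Rightarrow> tb \<Rightarrow> K poly" where
  "G n eps l m a = (case a of
     LE i \<Rightarrow> (\<lambda>u' u. [:Emat n eps l 1 i (fst u') (fst u) * (if snd u' = snd u then 1 else 0):]
       + [:0, (if fst u' = fst u then inverse (kval n eps i (fst u)) else 0) * Emat n eps m 1 i (snd u') (snd u):])
   | LF i \<Rightarrow> (\<lambda>u' u. [:0, Fmat n eps l 1 i (fst u') (fst u) * (if snd u' = snd u then kval n eps i (snd u) else 0):]
       + [:(if fst u' = fst u then 1 else 0) * Fmat n eps m 1 i (snd u') (snd u):]))"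

definition gdeg :: "nat \<Rightarrow> tlet \<Rightarrow> int" where
  "gdeg n a = (case a of LE i \<Rightarrow> (if i = 0 then int n - 1 else -1) | LF i \<Rightarrow> 0)"

definition gg :: "nat \<Rightarrow> tb \<Rightarrow> int" where
  "gg n u = (\<Sum>p=1..n. (int p - 1) * int (fst u p))"

lemma sum_alpha: assumes n: "2 \<le> n" and i: "i < n"
  shows "(\<Sum>p=1..n. (int p - 1) * alphaE n i p) = (if i = 0 then int n - 1 else -1)"
proof -
  define a where "a = idx n i"
  define b where "b = idx n (i+1)"
  have r: "a \<in> {1..n}" "b \<in> {1..n}" using idx_range n unfolding a_def b_def by auto
  have pw: "(int p - 1) * alphaE n i p = (if p = a then int p - 1 else 0) - (if p = b then int p - 1 else 0)" for p
    unfolding alphaE_def a_def[symmetric] b_def[symmetric] by auto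
  have "(\<Sum>p=1..n. (int p - 1) * alphaE n i p)
      = (\<Sum>p=1..n. if p = a then int p - 1 else 0) - (\<Sum>p=1..n. if p = b then int p - 1 else 0)"
    unfolding pw by (simp add: sum_subtractf)
  also have "\<dots> = (int a - 1) - (int b - 1)" using r by simp
  also have "\<dots> = (if i = 0 then int n - 1 else -1)" using idx_lt[OF i] idx_Suc[OF i] unfolding a_def b_def by auto
  finally show ?thesis .
qed

lemma gg_shift: "(\<And>q. int (fst u' q) = int (fst u q) + al q) \<Longrightarrow> gg n u' = gg n u + (\<Sum>p=1..n. (int p - 1) * al p)"
  unfolding gg_def by (simp add: sum.distrib[symmetric] distrib_left)

lemma gg_eq: "fst u' = fst u \<Longrightarrow> gg n u' = gg n u"
  unfolding gg_def by simp

lemma powi_plus1: "sF powi a * sF = sF powi (a + 1)"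
  by (simp add: power_int_add)




lemma phi_SM_LE: assumes n: "2 \<le> n" and i: "i < n"
  shows "phi n (SM n eps l m (LE i) u' u) = sF powi (gg n u - gg n u' + gdeg n (LE i)) * eF (G n eps l m (LE i) u' u)"
proof -
  interpret h: comm_ring_hom "phi n" by (rule phi_hom)
  define A where "A = Emat n eps l 1 i (fst u') (fst u) * (if snd u' = snd u then 1 else 0)"
  define Bc where "Bc = (if fst u' = fst u then inverse (kval n eps i (fst u)) else 0) * Emat n eps m 1 i (snd u') (snd u)"
  have S: "SM n eps l m (LE i) u' u = cK A * (if i = 0 then cX else 1) + cK Bc * (if i = 0 then cY else 1)"
    unfolding SM_def A_def Bc_def by simp
  have P: "phi n (SM n eps l m (LE i) u' u) = eF [:A:] + eF [:Bc:] * (if i = 0 then sF ^ n else 1)"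
    unfolding S h.hom_add h.hom_mult by (cases "i = 0") simp_all
  have G0: "G n eps l m (LE i) u' u = [:A:] + [:0, Bc:]"
    unfolding G_def A_def Bc_def tlet.case ..
  have Gd: "eF (G n eps l m (LE i) u' u) = eF [:A:] + sF * eF [:Bc:]"
    unfolding G0 eF_add eF_s ..
  show ?thesis
  proof (cases "stepE n eps l i (fst u) = Some (fst u')")
    case True
    have sh: "\<And>q. int (fst u' q) = int (fst u q) + alphaE n i q" using stepE_shift[OF True n i] by simp
    have ne: "fst u' \<noteq> fst u"
    proof
      assume "fst u' = fst u"
      hence "alphaE n i (idx n i) = 0" using sh[of "idx n i"] by simp
      thus False unfolding alphaE_def using idx_ne[OF n i] by simp
    qed
    have g: "gg n u' = gg n u + gdeg n (LE i)" using gg_shift[of u' u "alphaE n i", OF sh] sum_alpha[OF n i]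
      unfolding gdeg_def by simp
    have B0: "Bc = 0" using ne unfolding Bc_def by simp
    have e0: "gg n u - gg n u' + gdeg n (LE i) = 0" using g by simp
    show ?thesis unfolding P Gd B0 e0 by simp
  next
    case False
    have A0: "A = 0" unfolding A_def Emat_step using False by simp
    show ?thesis
    proof (cases "fst u' = fst u")
      case True
      have e: "gg n u - gg n u' + gdeg n (LE i) = gdeg n (LE i)" using gg_eq[OF True] by simp
      have c: "sF powi gdeg n (LE i) * sF = (if i = 0 then sF ^ n else 1)"
        unfolding powi_plus1 gdeg_def by (cases "i = 0") (simp_all add: power_int_of_nat)
      have "sF powi gdeg n (LE i) * (eF [:0:] + sF * eF [:Bc:]) = (sF powi gdeg n (LE i) * sF) * eF [:Bc:]"
        by (simp add: mult.assoc)
      also have "\<dots> = (if i = 0 then sF ^ n else 1) * eF [:Bc:]" unfolding c ..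
      finally have fin: "sF powi gdeg n (LE i) * (eF [:0:] + sF * eF [:Bc:]) = (if i = 0 then sF ^ n else 1) * eF [:Bc:]" .
      show ?thesis unfolding P Gd A0 e fin by (simp add: mult.commute)
    next
      case False
      hence B0: "Bc = 0" unfolding Bc_def by simp
      show ?thesis unfolding P Gd A0 B0 by simp
    qed
  qed
qed

lemma phi_SM_LF: assumes n: "2 \<le> n" and i: "i < n"
  shows "phi n (SM n eps l m (LF i) u' u) = sF powi (gg n u - gg n u' + gdeg n (LF i)) * eF (G n eps l m (LF i) u' u)"
proof -
  interpret h: comm_ring_hom "phi n" by (rule phi_hom)
  define A where "A = Fmat n eps l 1 i (fst u') (fst u) * (if snd u' = snd u then kval n eps i (snd u) else 0)"
  define Bc where "Bc = (if fst u' = fst u then 1 else 0) * Fmat n eps m 1 i (snd u') (snd u)"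
  have S: "SM n eps l m (LF i) u' u = cK A * (if i = 0 then cY else 1) + cK Bc * (if i = 0 then cX else 1)"
    unfolding SM_def A_def Bc_def by simp
  have P: "phi n (SM n eps l m (LF i) u' u) = eF [:A:] * (if i = 0 then sF ^ n else 1) + eF [:Bc:]"
    unfolding S h.hom_add h.hom_mult by (cases "i = 0") simp_all
  have G0: "G n eps l m (LF i) u' u = [:0, A:] + [:Bc:]"
    unfolding G_def A_def Bc_def tlet.case ..
  have Gd: "eF (G n eps l m (LF i) u' u) = sF * eF [:A:] + eF [:Bc:]"
    unfolding G0 eF_add eF_s ..
  have gd: "gdeg n (LF i) = 0" unfolding gdeg_def by simp
  show ?thesis
  proof (cases "stepF n eps l i (fst u) = Some (fst u')")
    case True
    have sh: "\<And>q. int (fst u' q) = int (fst u q) + (- alphaE n i q)" using stepF_shift[OF True n i] by simp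
    have ne: "fst u' \<noteq> fst u"
    proof
      assume "fst u' = fst u"
      hence "alphaE n i (idx n i) = 0" using sh[of "idx n i"] by simp
      thus False unfolding alphaE_def using idx_ne[OF n i] by simp
    qed
    have g: "gg n u - gg n u' = (if i = 0 then int n - 1 else -1)"
      using gg_shift[of u' u "\<lambda>q. - alphaE n i q", OF sh] sum_alpha[OF n i]
      by (simp add: sum_negf)
    have B0: "Bc = 0" using ne unfolding Bc_def by simp
    have c: "sF powi (gg n u - gg n u') * sF = (if i = 0 then sF ^ n else 1)"
      unfolding powi_plus1 g by (cases "i = 0") (simp_all add: power_int_of_nat)
    have "sF powi (gg n u - gg n u') * (sF * eF [:A:] + eF [:0:]) = (sF powi (gg n u - gg n u') * sF) * eF [:A:]"
      by (simp add: mult.assoc)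
    also have "\<dots> = (if i = 0 then sF ^ n else 1) * eF [:A:]" unfolding c ..
    finally have fin: "sF powi (gg n u - gg n u') * (sF * eF [:A:] + eF [:0:]) = (if i = 0 then sF ^ n else 1) * eF [:A:]" .
    show ?thesis unfolding P Gd B0 gd by (simp only: add_0_right fin) (simp add: mult.commute)
  next
    case False
    have A0: "A = 0" unfolding A_def Fmat_step using False by simp
    show ?thesis
    proof (cases "fst u' = fst u")
      case True
      have e: "gg n u - gg n u' + gdeg n (LF i) = 0" using gg_eq[OF True] gd by simp
      show ?thesis unfolding P Gd A0 e by simp
    next
      case False
      hence B0: "Bc = 0" unfolding Bc_def by simp
      show ?thesis unfolding P Gd A0 B0 by simp
    qed
  qed
qed


definition vl :: "nat \<Rightarrow> tlet \<Rightarrow> bool" where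
  "vl n a = (case a of LE i \<Rightarrow> i < n | LF i \<Rightarrow> i < n)"

lemma phi_SM: "2 \<le> n \<Longrightarrow> vl n a \<Longrightarrow>
   phi n (SM n eps l m a u' u) = sF powi (gg n u - gg n u' + gdeg n a) * eF (G n eps l m a u' u)"
  by (cases a) (auto simp: vl_def phi_SM_LE phi_SM_LF)

definition sumdeg :: "nat \<Rightarrow> tlet list \<Rightarrow> int" where
  "sumdeg n w = (\<Sum>a\<leftarrow>w. gdeg n a)"

lemma gid_SM_phi: "phi n (gid B u' u) = sF powi (gg n u - gg n u' + 0) * eF (gid B u' u)"
proof -
  interpret h: comm_ring_hom "phi n" by (rule phi_hom)
  show ?thesis by (cases "u' = u") (auto simp: gid_def)
qed

lemma phi_gwm:
  assumes fin: "finite B" and n: "2 \<le> n"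
  shows "(\<forall>a\<in>set w. vl n a) \<Longrightarrow> phi n (gwm B (SM n eps l m) w u' u)
     = sF powi (gg n u - gg n u' + sumdeg n w) * eF (gwm B (G n eps l m) w u' u)"
proof (induction w arbitrary: u' u)
  case Nil
  show ?case using gid_SM_phi[of n B u' u] by (simp add: sumdeg_def)
next
  case (Cons a w)
  interpret h: comm_ring_hom "phi n" by (rule phi_hom)
  interpret e: comm_ring_hom eF by (rule eF_hom)
  have va: "vl n a" using Cons.prems by simp
  have "phi n (gwm B (SM n eps l m) (a # w) u' u)
      = (\<Sum>u1\<in>B. phi n (gwm B (SM n eps l m) w u' u1) * phi n (SM n eps l m a u1 u))"
    by (simp add: gmm_def h.hom_sum h.hom_mult)
  also have "\<dots> = (\<Sum>u1\<in>B. (sF powi (gg n u1 - gg n u' + sumdeg n w) * eF (gwm B (G n eps l m) w u' u1))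
        * (sF powi (gg n u - gg n u1 + gdeg n a) * eF (G n eps l m a u1 u)))"
    using Cons.IH Cons.prems phi_SM[OF n va] by simp
  also have "\<dots> = (\<Sum>u1\<in>B. sF powi (gg n u - gg n u' + sumdeg n (a # w)) *
        eF (gwm B (G n eps l m) w u' u1 * G n eps l m a u1 u))"
  proof (intro sum.cong refl)
    fix u1
    have "sF powi (gg n u - gg n u' + sumdeg n (a # w)) = sF powi (gg n u1 - gg n u' + sumdeg n w) * sF powi (gg n u - gg n u1 + gdeg n a)"
      by (simp add: power_int_add[symmetric] sumdeg_def algebra_simps)
    thus "(sF powi (gg n u1 - gg n u' + sumdeg n w) * eF (gwm B (G n eps l m) w u' u1))
        * (sF powi (gg n u - gg n u1 + gdeg n a) * eF (G n eps l m a u1 u))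
      = sF powi (gg n u - gg n u' + sumdeg n (a # w)) * eF (gwm B (G n eps l m) w u' u1 * G n eps l m a u1 u)"
      by (simp add: e.hom_mult mult_ac)
  qed
  also have "\<dots> = sF powi (gg n u - gg n u' + sumdeg n (a # w)) * eF (gwm B (G n eps l m) (a # w) u' u)"
    by (simp add: gmm_def e.hom_sum sum_distrib_left)
  finally show ?case .
qed

lemma phi_gcm:
  assumes fin: "finite B" and n: "2 \<le> n"
    and C: "\<And>p. p \<in> set C \<Longrightarrow> (\<forall>a\<in>set (fst p). vl n a) \<and> sumdeg n (fst p) = D"
  shows "phi n (gcm B (SM n eps l m) cK C u' u) = sF powi (gg n u - gg n u' + D) * eF (gcm B (G n eps l m) (\<lambda>c. [:c:]) C u' u)"
proof -
  interpret h: comm_ring_hom "phi n" by (rule phi_hom)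
  interpret e: comm_ring_hom eF by (rule eF_hom)
  have "phi n (gcm B (SM n eps l m) cK C u' u) = (\<Sum>p\<leftarrow>C. eF [:snd p:] * phi n (gwm B (SM n eps l m) (fst p) u' u))"
    unfolding gcm_def h.hom_sum_list by (simp add: comp_def h.hom_mult)
  also have "\<dots> = (\<Sum>p\<leftarrow>C. sF powi (gg n u - gg n u' + D) * eF ([:snd p:] * gwm B (G n eps l m) (fst p) u' u))"
  proof (intro arg_cong[where f=sum_list] map_cong refl)
    fix p assume p: "p \<in> set C"
    show "eF [:snd p:] * phi n (gwm B (SM n eps l m) (fst p) u' u) = sF powi (gg n u - gg n u' + D) * eF ([:snd p:] * gwm B (G n eps l m) (fst p) u' u)"
      unfolding e.hom_mult using phi_gwm[OF fin n, of "fst p" eps l m u' u] C[OF p] by (simp add: mult_ac)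
  qed
  also have "\<dots> = sF powi (gg n u - gg n u' + D) * eF (gcm B (G n eps l m) (\<lambda>c. [:c:]) C u' u)"
    unfolding gcm_def e.hom_sum_list by (simp add: comp_def sum_list_mult_left)
  finally show ?thesis .
qed



lemma sum_delta_mult: "finite B \<Longrightarrow> a \<in> B \<Longrightarrow> (\<Sum>y\<in>B. T * (if y = a then 1 else 0)) = (T::'a::comm_semiring_1)"
proof -
  assume "finite B" "a \<in> B"
  have "(\<Sum>y\<in>B. T * (if y = a then 1 else 0)) = (\<Sum>y\<in>B. if y = a then T else 0)" by (intro sum.cong) auto
  thus ?thesis using \<open>finite B\<close> \<open>a \<in> B\<close> by simp
qed

lemma sum2_delta: "finite A \<Longrightarrow> finite B \<Longrightarrow> a \<in> A \<Longrightarrow> b \<in> B \<Longrightarrow>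
  (\<Sum>x\<in>A. \<Sum>y\<in>B. if x = a then (if y = b then V else 0) else 0) = (V::'a::comm_semiring_1)"
proof -
  assume f: "finite A" "finite B" "a \<in> A" "b \<in> B"
  have "(\<Sum>x\<in>A. \<Sum>y\<in>B. if x = a then (if y = b then V else 0) else 0) = (\<Sum>x\<in>A. if x = a then (\<Sum>y\<in>B. if y = b then V else 0) else 0)"
    by (intro sum.cong) auto
  thus ?thesis using f by simp
qed

definition L0 :: "nat \<Rightarrow> (nat \<Rightarrow> bool) \<Rightarrow> nat \<Rightarrow> nat \<Rightarrow> tlet \<Rightarrow> tb \<Rightarrow> tb \<Rightarrow> K" where
  "L0 n eps l m a u' u = poly (G n eps l m a u' u) 0"

lemma L0_LE: "L0 n eps l m (LE i) u' u = Emat n eps l 1 i (fst u') (fst u) * (if snd u' = snd u then 1 else 0)"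
  unfolding L0_def G_def by simp

lemma L0_LF: "L0 n eps l m (LF i) u' u = (if fst u' = fst u then 1 else 0) * Fmat n eps m 1 i (snd u') (snd u)"
  unfolding L0_def G_def by simp

lemma lead_LE_words:
  assumes n: "2 \<le> n"
  shows "set ew \<subseteq> {..<n} \<Longrightarrow> snd u \<in> Wbasis n eps m \<Longrightarrow>
    gwm (Wbasis n eps l \<times> Wbasis n eps m) (L0 n eps l m) (map LE ew) u' u
    = monoact.wm n eps l (stepE n eps l) (coefE n) ew (fst u') (fst u) * (if snd u' = snd u then 1 else 0)"
proof (induction ew arbitrary: u' u)
  case Nil
  interpret E: monoact n eps l "stepE n eps l" "coefE n" "alphaE n" "{..<n}" by (rule monoact_E[OF n])
  show ?case using Nil.prems by (auto simp: gid_def E.idW_def prod_eq_iff mem_Times_iff)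
next
  case (Cons i ew)
  interpret E: monoact n eps l "stepE n eps l" "coefE n" "alphaE n" "{..<n}" by (rule monoact_E[OF n])
  have i: "i < n" using Cons.prems by simp
  let ?B1 = "Wbasis n eps l" and ?B2 = "Wbasis n eps m"
  have "gwm (?B1 \<times> ?B2) (L0 n eps l m) (map LE (i # ew)) u' u
      = (\<Sum>u1\<in>?B1 \<times> ?B2. gwm (?B1 \<times> ?B2) (L0 n eps l m) (map LE ew) u' u1 * L0 n eps l m (LE i) u1 u)"
    by (simp add: gmm_def)
  also have "\<dots> = (\<Sum>u1\<in>?B1 \<times> ?B2. (E.wm ew (fst u') (fst u1) * (if snd u' = snd u1 then 1 else 0))
       * (Emat n eps l 1 i (fst u1) (fst u) * (if snd u1 = snd u then 1 else 0)))"
    using Cons.IH Cons.prems by (intro sum.cong refl) (auto simp: L0_LE)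
  also have "\<dots> = (\<Sum>b1\<in>?B1. \<Sum>c1\<in>?B2. (E.wm ew (fst u') b1 * Emat n eps l 1 i b1 (fst u))
       * (if c1 = snd u then (if snd u' = snd u then 1 else 0) else 0))"
    unfolding sum.cartesian_product by (intro sum.cong refl) (auto simp: case_prod_beta)
  also have "\<dots> = (\<Sum>b1\<in>?B1. (E.wm ew (fst u') b1 * Emat n eps l 1 i b1 (fst u)) * (if snd u' = snd u then 1 else 0))"
  proof (intro sum.cong refl)
    fix b1
    have "(\<Sum>c1\<in>?B2. (E.wm ew (fst u') b1 * Emat n eps l 1 i b1 (fst u) * (if snd u' = snd u then 1 else 0)) * (if c1 = snd u then 1 else 0))
       = E.wm ew (fst u') b1 * Emat n eps l 1 i b1 (fst u) * (if snd u' = snd u then 1 else 0)"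
      using Cons.prems(2) by (rule sum_delta_mult[OF finite_Wbasis])
    thus "(\<Sum>c1\<in>?B2. (E.wm ew (fst u') b1 * Emat n eps l 1 i b1 (fst u)) * (if c1 = snd u then (if snd u' = snd u then 1 else 0) else 0))
       = (E.wm ew (fst u') b1 * Emat n eps l 1 i b1 (fst u)) * (if snd u' = snd u then 1 else 0)"
      by (simp add: mult_ac if_distrib cong: if_cong)
  qed
  also have "\<dots> = (\<Sum>b1\<in>?B1. E.wm ew (fst u') b1 * Emat n eps l 1 i b1 (fst u)) * (if snd u' = snd u then 1 else 0)"
    by (simp add: sum_distrib_right)
  also have "\<dots> = E.wm (i # ew) (fst u') (fst u) * (if snd u' = snd u then 1 else 0)"
    by (simp add: E.mm_def lmE[OF n i])
  finally show ?case .
qed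

lemma lead_LF_words:
  assumes n: "2 \<le> n"
  shows "set fw \<subseteq> {..<n} \<Longrightarrow> fst u \<in> Wbasis n eps l \<Longrightarrow>
    gwm (Wbasis n eps l \<times> Wbasis n eps m) (L0 n eps l m) (map LF fw) u' u
    = (if fst u' = fst u then 1 else 0) * monoact.wm n eps m (stepF n eps m) (coefF n) fw (snd u') (snd u)"
proof (induction fw arbitrary: u' u)
  case Nil
  interpret F: monoact n eps m "stepF n eps m" "coefF n" "\<lambda>i q. - alphaE n i q" "{..<n}" by (rule monoact_F[OF n])
  show ?case using Nil.prems by (auto simp: gid_def F.idW_def prod_eq_iff mem_Times_iff)
next
  case (Cons i fw)
  interpret F: monoact n eps m "stepF n eps m" "coefF n" "\<lambda>i q. - alphaE n i q" "{..<n}" by (rule monoact_F[OF n])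
  have i: "i < n" using Cons.prems by simp
  let ?B1 = "Wbasis n eps l" and ?B2 = "Wbasis n eps m"
  have "gwm (?B1 \<times> ?B2) (L0 n eps l m) (map LF (i # fw)) u' u
      = (\<Sum>u1\<in>?B1 \<times> ?B2. gwm (?B1 \<times> ?B2) (L0 n eps l m) (map LF fw) u' u1 * L0 n eps l m (LF i) u1 u)"
    by (simp add: gmm_def)
  also have "\<dots> = (\<Sum>u1\<in>?B1 \<times> ?B2. ((if fst u' = fst u1 then 1 else 0) * F.wm fw (snd u') (snd u1))
       * ((if fst u1 = fst u then 1 else 0) * Fmat n eps m 1 i (snd u1) (snd u)))"
    using Cons.IH Cons.prems by (intro sum.cong refl) (auto simp: L0_LF)
  also have "\<dots> = (\<Sum>b1\<in>?B1. \<Sum>c1\<in>?B2. (if b1 = fst u then (if fst u' = fst u then 1 else 0) else 0)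
       * (F.wm fw (snd u') c1 * Fmat n eps m 1 i c1 (snd u)))"
    unfolding sum.cartesian_product by (intro sum.cong refl) (auto simp: case_prod_beta)
  also have "\<dots> = (\<Sum>b1\<in>?B1. if b1 = fst u then (if fst u' = fst u then 1 else 0) * (\<Sum>c1\<in>?B2. F.wm fw (snd u') c1 * Fmat n eps m 1 i c1 (snd u)) else 0)"
    by (intro sum.cong refl) (auto simp: sum_distrib_left)
  also have "\<dots> = (if fst u' = fst u then 1 else 0) * (\<Sum>c1\<in>?B2. F.wm fw (snd u') c1 * Fmat n eps m 1 i c1 (snd u))"
    using Cons.prems(2) by (simp add: finite_Wbasis)
  also have "\<dots> = (if fst u' = fst u then 1 else 0) * F.wm (i # fw) (snd u') (snd u)"
    by (simp add: F.mm_def lmF[OF n i])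
  finally show ?case .
qed

lemma lead_tensor_word:
  assumes n: "2 \<le> n" and ew: "set ew \<subseteq> {..<n}" and fw: "set fw \<subseteq> {..<n}"
    and u': "u' \<in> Wbasis n eps l \<times> Wbasis n eps m" and u: "u \<in> Wbasis n eps l \<times> Wbasis n eps m"
  shows "gwm (Wbasis n eps l \<times> Wbasis n eps m) (L0 n eps l m) (map LE ew @ map LF fw) u' u
    = monoact.wm n eps l (stepE n eps l) (coefE n) ew (fst u') (fst u) * monoact.wm n eps m (stepF n eps m) (coefF n) fw (snd u') (snd u)"
proof -
  let ?B1 = "Wbasis n eps l" and ?B2 = "Wbasis n eps m"
  let ?wE = "monoact.wm n eps l (stepE n eps l) (coefE n) ew" and ?wF = "monoact.wm n eps m (stepF n eps m) (coefF n) fw"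
  have fin: "finite (?B1 \<times> ?B2)" using finite_Wbasis by simp
  have "gwm (?B1 \<times> ?B2) (L0 n eps l m) (map LE ew @ map LF fw) u' u
      = (\<Sum>u1\<in>?B1 \<times> ?B2. gwm (?B1 \<times> ?B2) (L0 n eps l m) (map LF fw) u' u1 * gwm (?B1 \<times> ?B2) (L0 n eps l m) (map LE ew) u1 u)"
    using gwm_append_aux[OF fin u] by (simp add: gmm_def)
  also have "\<dots> = (\<Sum>u1\<in>?B1 \<times> ?B2. ((if fst u' = fst u1 then 1 else 0) * ?wF (snd u') (snd u1))
       * (?wE (fst u1) (fst u) * (if snd u1 = snd u then 1 else 0)))"
  proof (intro sum.cong refl)
    fix u1 assume u1: "u1 \<in> ?B1 \<times> ?B2"
    have a: "gwm (?B1 \<times> ?B2) (L0 n eps l m) (map LE ew) u1 u = ?wE (fst u1) (fst u) * (if snd u1 = snd u then 1 else 0)"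
      using lead_LE_words[OF n ew, where u = u and u' = u1] u by (auto simp: mem_Times_iff)
    have b: "gwm (?B1 \<times> ?B2) (L0 n eps l m) (map LF fw) u' u1 = (if fst u' = fst u1 then 1 else 0) * ?wF (snd u') (snd u1)"
      using lead_LF_words[OF n fw, where u = u1 and u' = u'] u1 by (auto simp: mem_Times_iff)
    show "gwm (?B1 \<times> ?B2) (L0 n eps l m) (map LF fw) u' u1 * gwm (?B1 \<times> ?B2) (L0 n eps l m) (map LE ew) u1 u
      = ((if fst u' = fst u1 then 1 else 0) * ?wF (snd u') (snd u1)) * (?wE (fst u1) (fst u) * (if snd u1 = snd u then 1 else 0))"
      unfolding a b ..
  qed
  also have "\<dots> = (\<Sum>b1\<in>?B1. \<Sum>c1\<in>?B2. (if b1 = fst u' then (if c1 = snd u then ?wE (fst u') (fst u) * ?wF (snd u') (snd u) else 0) else 0))"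
    unfolding sum.cartesian_product by (intro sum.cong refl) (auto simp: case_prod_beta)
  also have "\<dots> = ?wE (fst u') (fst u) * ?wF (snd u') (snd u)"
    using u u' by (intro sum2_delta) (auto simp: finite_Wbasis mem_Times_iff)
  finally show ?thesis .
qed


definition tcomb :: "(nat list \<times> K) list \<Rightarrow> (nat list \<times> K) list \<Rightarrow> (tlet list \<times> K) list" where
  "tcomb Ce Cf = concat (map (\<lambda>pe. map (\<lambda>pf. (map LE (fst pe) @ map LF (fst pf), snd pe * snd pf)) Cf) Ce)"

lemma tcomb_mem: assumes "p \<in> set (tcomb Ce Cf)" shows "\<exists>pe\<in>set Ce. \<exists>pf\<in>set Cf. fst p = map LE (fst pe) @ map LF (fst pf)"
proof -
  from assms obtain pe pf where "pe \<in> set Ce" "pf \<in> set Cf" "p = (map LE (fst pe) @ map LF (fst pf), snd pe * snd pf)"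
    unfolding tcomb_def by auto
  thus ?thesis by auto
qed

lemma sum_list_prod: "(\<Sum>x\<leftarrow>xs. f x) * (\<Sum>y\<leftarrow>ys. g y) = (\<Sum>x\<leftarrow>xs. \<Sum>y\<leftarrow>ys. f x * g y)" for f :: "_ \<Rightarrow> 'a::comm_semiring_1"
  by (induction xs) (simp_all add: distrib_right sum_list_mult_left sum_list_addf)

lemma lead_tcomb:
  assumes n: "2 \<le> n" and Ce: "\<forall>p\<in>set Ce. set (fst p) \<subseteq> {..<n}" and Cf: "\<forall>p\<in>set Cf. set (fst p) \<subseteq> {..<n}"
    and u': "u' \<in> Wbasis n eps l \<times> Wbasis n eps m" and u: "u \<in> Wbasis n eps l \<times> Wbasis n eps m"
  shows "gcm (Wbasis n eps l \<times> Wbasis n eps m) (L0 n eps l m) (\<lambda>c. c) (tcomb Ce Cf) u' u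
    = monoact.cm n eps l (stepE n eps l) (coefE n) Ce (fst u') (fst u) * monoact.cm n eps m (stepF n eps m) (coefF n) Cf (snd u') (snd u)"
proof -
  interpret E: monoact n eps l "stepE n eps l" "coefE n" "alphaE n" "{..<n}" by (rule monoact_E[OF n])
  interpret F: monoact n eps m "stepF n eps m" "coefF n" "\<lambda>i q. - alphaE n i q" "{..<n}" by (rule monoact_F[OF n])
  let ?B = "Wbasis n eps l \<times> Wbasis n eps m"
  have "gcm ?B (L0 n eps l m) (\<lambda>c. c) (tcomb Ce Cf) u' u
     = (\<Sum>pe\<leftarrow>Ce. \<Sum>pf\<leftarrow>Cf. (snd pe * snd pf) * gwm ?B (L0 n eps l m) (map LE (fst pe) @ map LF (fst pf)) u' u)"
    unfolding gcm_def tcomb_def by (simp add: sum_list_map_concat comp_def)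
  also have "\<dots> = (\<Sum>pe\<leftarrow>Ce. \<Sum>pf\<leftarrow>Cf. (snd pe * E.wm (fst pe) (fst u') (fst u)) * (snd pf * F.wm (fst pf) (snd u') (snd u)))"
  proof (intro arg_cong[where f=sum_list] map_cong refl)
    fix pe pf assume pe: "pe \<in> set Ce" and pf: "pf \<in> set Cf"
    show "(snd pe * snd pf) * gwm ?B (L0 n eps l m) (map LE (fst pe) @ map LF (fst pf)) u' u
      = (snd pe * E.wm (fst pe) (fst u') (fst u)) * (snd pf * F.wm (fst pf) (snd u') (snd u))"
      using lead_tensor_word[OF n _ _ u' u, of "fst pe" "fst pf"] Ce pe Cf pf by (simp add: mult_ac)
  qed
  also have "\<dots> = (\<Sum>pe\<leftarrow>Ce. snd pe * E.wm (fst pe) (fst u') (fst u)) * (\<Sum>pf\<leftarrow>Cf. snd pf * F.wm (fst pf) (snd u') (snd u))"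
    by (simp only: sum_list_prod)
  also have "\<dots> = E.cm Ce (fst u') (fst u) * F.cm Cf (snd u') (snd u)"
    unfolding E.cm_def F.cm_def by (simp add: case_prod_unfold)
  finally show ?thesis .
qed

lemma sumdeg_tword: assumes n: "2 \<le> n" and ew: "set ew \<subseteq> {..<n}"
  shows "sumdeg n (map LE ew @ map LF fw) = (\<Sum>p=1..n. (int p - 1) * monoact.shw (alphaE n) ew p)"
proof -
  interpret E: monoact n eps 0 "stepE n eps 0" "coefE n" "alphaE n" "{..<n}" by (rule monoact_E[OF n])
  have "sumdeg n (map LE ew @ map LF fw) = (\<Sum>i\<leftarrow>ew. \<Sum>p=1..n. (int p - 1) * alphaE n i p)"
    unfolding sumdeg_def using ew sum_alpha[OF n]
    by (simp add: comp_def gdeg_def) (intro arg_cong[where f=sum_list] map_cong refl, auto)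
  also have "\<dots> = (\<Sum>p=1..n. \<Sum>i\<leftarrow>ew. (int p - 1) * alphaE n i p)" by (rule sum_list_swap_sum)
  also have "\<dots> = (\<Sum>p=1..n. (int p - 1) * monoact.shw (alphaE n) ew p)"
    unfolding E.shw_def by (simp add: sum_list_mult_left)
  finally show ?thesis .
qed

definition Dg :: "nat \<Rightarrow> tb \<Rightarrow> tb \<Rightarrow> int" where
  "Dg n t' t = (\<Sum>p=1..n. (int p - 1) * (int (fst t' p) - int (fst t p)))"

lemma tensor_unit:
  assumes n: "2 \<le> n" and t: "t \<in> Wbasis n eps l \<times> Wbasis n eps m" and t': "t' \<in> Wbasis n eps l \<times> Wbasis n eps m"
  shows "\<exists>C. (\<forall>p\<in>set C. (\<forall>a\<in>set (fst p). vl n a) \<and> sumdeg n (fst p) = Dg n t' t) \<and>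
    (\<forall>u'\<in>Wbasis n eps l \<times> Wbasis n eps m. \<forall>u\<in>Wbasis n eps l \<times> Wbasis n eps m.
       gcm (Wbasis n eps l \<times> Wbasis n eps m) (L0 n eps l m) (\<lambda>c. c) C u' u = (if u' = t' \<and> u = t then 1 else 0))"
proof -
  interpret E: monoact n eps l "stepE n eps l" "coefE n" "alphaE n" "{..<n}" by (rule monoact_E[OF n])
  interpret F: monoact n eps m "stepF n eps m" "coefF n" "\<lambda>i q. - alphaE n i q" "{..<n}" by (rule monoact_F[OF n])
  obtain Ce where Ce: "\<forall>i k. E.cm Ce i k = (if i = fst t' \<and> k = fst t then 1 else 0)"
    "\<forall>p\<in>set Ce. set (fst p) \<subseteq> {..<n} \<and> E.shw (fst p) = (\<lambda>q. int (fst t' q) - int (fst t q))"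
    using E.unit_combo[of "fst t" "fst t'"] t t' by (auto simp: mem_Times_iff)
  obtain Cf where Cf: "\<forall>i k. F.cm Cf i k = (if i = snd t' \<and> k = snd t then 1 else 0)"
    "\<forall>p\<in>set Cf. set (fst p) \<subseteq> {..<n}"
    using F.unit_combo[of "snd t" "snd t'"] t t' by (auto simp: mem_Times_iff)
  have 1: "\<forall>p\<in>set (tcomb Ce Cf). (\<forall>a\<in>set (fst p). vl n a) \<and> sumdeg n (fst p) = Dg n t' t"
  proof
    fix p assume "p \<in> set (tcomb Ce Cf)"
    then obtain pe pf where pe: "pe \<in> set Ce" and pf: "pf \<in> set Cf" and fp: "fst p = map LE (fst pe) @ map LF (fst pf)"
      using tcomb_mem by blast
    have s1: "set (fst pe) \<subseteq> {..<n}" "set (fst pf) \<subseteq> {..<n}" using Ce(2) pe Cf(2) pf by auto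
    have "\<forall>a\<in>set (fst p). vl n a" using fp s1 by (auto simp: vl_def)
    moreover have "sumdeg n (fst p) = Dg n t' t"
      using fp sumdeg_tword[OF n, of "fst pe" "fst pf"] Ce(2) pe unfolding Dg_def by simp
    ultimately show "(\<forall>a\<in>set (fst p). vl n a) \<and> sumdeg n (fst p) = Dg n t' t" by simp
  qed
  have 2: "\<forall>u'\<in>Wbasis n eps l \<times> Wbasis n eps m. \<forall>u\<in>Wbasis n eps l \<times> Wbasis n eps m.
       gcm (Wbasis n eps l \<times> Wbasis n eps m) (L0 n eps l m) (\<lambda>c. c) (tcomb Ce Cf) u' u = (if u' = t' \<and> u = t then 1 else 0)"
    using lead_tcomb[OF n] Ce Cf by (auto simp: prod_eq_iff)
  show ?thesis using 1 2 by blast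
qed

lemma poly0_gcm: "poly (gcm B (G n eps l m) (\<lambda>c. [:c:]) C u' u) 0 = gcm B (L0 n eps l m) (\<lambda>c. c) C u' u"
proof -
  interpret h0: comm_ring_hom "\<lambda>p::K poly. coeff p 0" by unfold_locales (simp_all add: coeff_mult_0)
  have "poly (gcm B (G n eps l m) (\<lambda>c. [:c:]) C u' u) 0 = coeff (gcm B (G n eps l m) (\<lambda>c. [:c:]) C u' u) 0"
    by (simp add: poly_0_coeff_0)
  also have "\<dots> = gcm B (\<lambda>a i k. coeff (G n eps l m a i k) 0) (\<lambda>c. coeff [:c:] 0) C u' u" by (rule h0.hom_gcm)
  also have "\<dots> = gcm B (L0 n eps l m) (\<lambda>c. c) C u' u" unfolding L0_def by (simp add: poly_0_coeff_0)
  finally show ?thesis .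
qed




definition dmat :: "nat \<Rightarrow> (nat \<Rightarrow> 'a::comm_ring_1) \<Rightarrow> 'a mat" where
  "dmat M d = mat M M (\<lambda>(i, j). if i = j then d i else 0)"

lemma dmat_carrier: "dmat M d \<in> carrier_mat M M" unfolding dmat_def by simp

lemma det_dmat: "det (dmat M d) = prod_list (map d [0..<M])"
proof -
  have "upper_triangular (dmat M d)" unfolding upper_triangular_def dmat_def by auto
  hence "det (dmat M d) = prod_list (diag_mat (dmat M d))" using det_upper_triangular dmat_carrier by blast
  also have "diag_mat (dmat M d) = map d [0..<M]" unfolding diag_mat_def dmat_def by auto
  finally show ?thesis .
qed

lemma det_dmat_nz: "(\<And>i. i < M \<Longrightarrow> d i \<noteq> 0) \<Longrightarrow> det (dmat M d) \<noteq> (0::'a::idom)"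
  unfolding det_dmat by (auto simp: prod_list_zero_iff)

lemma dmat_mult_left: assumes A: "A \<in> carrier_mat M M" and ij: "i < M" "j < M"
  shows "(dmat M d * A) $$ (i, j) = d i * A $$ (i, j)"
proof -
  have "(dmat M d * A) $$ (i, j) = (\<Sum>k\<in>{0..<M}. (if i = k then d i else 0) * A $$ (k, j))"
    using A ij by (simp add: dmat_def scalar_prod_def)
  also have "\<dots> = (\<Sum>k\<in>{0..<M}. if k = i then d i * A $$ (i, j) else 0)" by (intro sum.cong) auto
  finally show ?thesis using ij by simp
qed

lemma dmat_mult_right: assumes A: "A \<in> carrier_mat M M" and ij: "i < M" "j < M"
  shows "(A * dmat M d) $$ (i, j) = A $$ (i, j) * d j"
proof -
  have "(A * dmat M d) $$ (i, j) = (\<Sum>k\<in>{0..<M}. A $$ (i, k) * (if k = j then d k else 0))"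
    using A ij by (simp add: dmat_def scalar_prod_def)
  also have "\<dots> = (\<Sum>k\<in>{0..<M}. if k = j then A $$ (i, j) * d j else 0)" by (intro sum.cong) auto
  finally show ?thesis using ij by simp
qed

lemma span_from_det: fixes A :: "K mat"
  assumes A: "A \<in> carrier_mat M M" and d: "det A \<noteq> 0" and j0: "j0 < M"
  shows "\<exists>c. \<forall>r<M. (\<Sum>k<M. A $$ (r, k) * c k) = (if r = j0 then 1 else 0)"
proof -
  define c where "c k = adj_mat A $$ (k, j0) / det A" for k
  have adj: "adj_mat A \<in> carrier_mat M M" "A * adj_mat A = det A \<cdot>\<^sub>m 1\<^sub>m M" using adj_mat[OF A] by auto
  have "\<forall>r<M. (\<Sum>k<M. A $$ (r, k) * c k) = (if r = j0 then 1 else 0)"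
  proof (intro allI impI)
    fix r assume r: "r < M"
    have "(A * adj_mat A) $$ (r, j0) = (\<Sum>k\<in>{0..<M}. A $$ (r, k) * adj_mat A $$ (k, j0))"
      using A adj(1) r j0 by (simp add: scalar_prod_def)
    hence "(\<Sum>k\<in>{0..<M}. A $$ (r, k) * adj_mat A $$ (k, j0)) = det A * (if r = j0 then 1 else 0)"
      using adj(2) r j0 by simp
    hence "(\<Sum>k<M. A $$ (r, k) * adj_mat A $$ (k, j0)) / det A = (if r = j0 then 1 else 0)"
      using d by (simp add: atLeast0LessThan)
    thus "(\<Sum>k<M. A $$ (r, k) * c k) = (if r = j0 then 1 else 0)"
      unfolding c_def by (simp add: sum_divide_distrib)
  qed
  thus ?thesis by blast
qed

section \<open>Irreducibility from matrix units\<close>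

lemma units_give_all:
  fixes B :: "'b set"
  assumes inv: "invariant_subspace B Ms S" and finB: "finite B"
    and units: "\<And>t t'. t \<in> B \<Longrightarrow> t' \<in> B \<Longrightarrow> \<exists>Z. closedS B S Z \<and> (\<forall>u'\<in>B. \<forall>u\<in>B. Z u' u = (if u' = t' \<and> u = t then 1 else 0))"
  shows "S = {\<lambda>_. 0} \<or> S = Vspace B"
proof (cases "\<exists>v\<in>S. v \<noteq> (\<lambda>_. 0)")
  case False
  hence "S \<subseteq> {\<lambda>_. 0}" by auto
  thus ?thesis using S_0[OF inv finB] by auto
next
  case True
  then obtain v where v: "v \<in> S" "v \<noteq> (\<lambda>_. 0)" by blast
  have vV: "v \<in> Vspace B" using S_sub[OF inv finB] v by auto
  obtain t where t: "t \<in> B" "v t \<noteq> 0" using v(2) vV unfolding Vspace_def by (auto simp: fun_eq_iff)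
  define ind :: "'b \<Rightarrow> 'b \<Rightarrow> K" where "ind t' = (\<lambda>b. if b = t' then (1::K) else 0)" for t'
  have indS: "ind t' \<in> S" if t': "t' \<in> B" for t' :: 'b
  proof -
    obtain Z where Z: "closedS B S Z" "\<forall>u'\<in>B. \<forall>u\<in>B. Z u' u = (if u' = t' \<and> u = t then 1 else 0)"
      using units[OF t(1) t'] by blast
    have "mat_apply B Z v \<in> S" using Z(1) v(1) unfolding closedS_def by blast
    moreover have "mat_apply B Z v = (\<lambda>b. v t * ind t' b)"
    proof (intro ext)
      fix b
      show "mat_apply B Z v b = v t * ind t' b"
      proof (cases "b \<in> B")
        case True
        have "(\<Sum>u\<in>B. Z b u * v u) = (\<Sum>u\<in>B. if u = t then (if b = t' then v t else 0) else 0)"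
          using Z(2) True by (intro sum.cong) auto
        thus ?thesis using True t(1) finB unfolding mat_apply_def ind_def by simp
      next
        case False thus ?thesis using t' unfolding mat_apply_def ind_def by auto
      qed
    qed
    ultimately have "(\<lambda>b. v t * ind t' b) \<in> S" by simp
    hence "(\<lambda>b. inverse (v t) * (v t * ind t' b)) \<in> S" by (rule S_smult[OF inv finB])
    thus ?thesis using t(2) by (simp add: field_simps)
  qed
  have "Vspace B \<subseteq> S"
  proof
    fix w assume w: "w \<in> Vspace B"
    have "(\<lambda>b. \<Sum>t'\<in>B. w t' * ind t' b) \<in> S"
      by (rule S_sum[OF inv finB finB]) (use indS S_smult[OF inv finB] in auto)
    moreover have "(\<lambda>b. \<Sum>t'\<in>B. w t' * ind t' b) = w"
    proof (intro ext)
      fix b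
      have "(\<Sum>t'\<in>B. w t' * ind t' b) = (\<Sum>t'\<in>B. if t' = b then w b else 0)"
        unfolding ind_def by (intro sum.cong) auto
      thus "(\<Sum>t'\<in>B. w t' * ind t' b) = w b" using w finB unfolding Vspace_def by auto
    qed
    ultimately show "w \<in> S" by simp
  qed
  thus ?thesis using S_sub[OF inv finB] by blast
qed


definition Bt :: "nat \<Rightarrow> (nat \<Rightarrow> bool) \<Rightarrow> nat \<Rightarrow> nat \<Rightarrow> tb set" where
  "Bt n eps l m = Wbasis n eps l \<times> Wbasis n eps m"

definition enum :: "nat \<Rightarrow> (nat \<Rightarrow> bool) \<Rightarrow> nat \<Rightarrow> nat \<Rightarrow> (tb \<times> tb) list" where
  "enum n eps l m = (SOME xs. set xs = Bt n eps l m \<times> Bt n eps l m \<and> distinct xs)"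

definition Cu :: "nat \<Rightarrow> (nat \<Rightarrow> bool) \<Rightarrow> nat \<Rightarrow> nat \<Rightarrow> tb \<times> tb \<Rightarrow> (tlet list \<times> K) list" where
  "Cu n eps l m \<tau> = (SOME C. (\<forall>p\<in>set C. (\<forall>a\<in>set (fst p). vl n a) \<and> sumdeg n (fst p) = Dg n (fst \<tau>) (snd \<tau>)) \<and>
    (\<forall>u'\<in>Bt n eps l m. \<forall>u\<in>Bt n eps l m.
       gcm (Bt n eps l m) (L0 n eps l m) (\<lambda>c. c) C u' u = (if u' = fst \<tau> \<and> u = snd \<tau> then 1 else 0)))"

definition Msym :: "nat \<Rightarrow> (nat \<Rightarrow> bool) \<Rightarrow> nat \<Rightarrow> nat \<Rightarrow> K poly poly mat" where
  "Msym n eps l m = mat (length (enum n eps l m)) (length (enum n eps l m))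
     (\<lambda>(r, j). gcm (Bt n eps l m) (SM n eps l m) cK (Cu n eps l m (enum n eps l m ! j))
        (fst (enum n eps l m ! r)) (snd (enum n eps l m ! r)))"

lemma finite_Bt: "finite (Bt n eps l m)" unfolding Bt_def using finite_Wbasis by simp

lemma enum_prop: "set (enum n eps l m) = Bt n eps l m \<times> Bt n eps l m \<and> distinct (enum n eps l m)"
proof -
  have "finite (Bt n eps l m \<times> Bt n eps l m)" using finite_Bt by simp
  hence "\<exists>xs. set xs = Bt n eps l m \<times> Bt n eps l m \<and> distinct xs"
    by (rule finite_distinct_list)
  thus ?thesis unfolding enum_def by (rule someI_ex)
qed

lemma Cu_prop:
  assumes n: "2 \<le> n" and \<tau>: "\<tau> \<in> Bt n eps l m \<times> Bt n eps l m"
  shows "(\<forall>p\<in>set (Cu n eps l m \<tau>). (\<forall>a\<in>set (fst p). vl n a) \<and> sumdeg n (fst p) = Dg n (fst \<tau>) (snd \<tau>)) \<and>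
    (\<forall>u'\<in>Bt n eps l m. \<forall>u\<in>Bt n eps l m.
       gcm (Bt n eps l m) (L0 n eps l m) (\<lambda>c. c) (Cu n eps l m \<tau>) u' u = (if u' = fst \<tau> \<and> u = snd \<tau> then 1 else 0))"
proof -
  have "\<exists>C. (\<forall>p\<in>set C. (\<forall>a\<in>set (fst p). vl n a) \<and> sumdeg n (fst p) = Dg n (fst \<tau>) (snd \<tau>)) \<and>
    (\<forall>u'\<in>Bt n eps l m. \<forall>u\<in>Bt n eps l m.
       gcm (Bt n eps l m) (L0 n eps l m) (\<lambda>c. c) C u' u = (if u' = fst \<tau> \<and> u = snd \<tau> then 1 else 0))"
  proof -
    have t: "snd \<tau> \<in> Wbasis n eps l \<times> Wbasis n eps m" "fst \<tau> \<in> Wbasis n eps l \<times> Wbasis n eps m"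
      using \<tau> unfolding Bt_def by (auto simp: mem_Times_iff)
    show ?thesis unfolding Bt_def by (rule tensor_unit[OF n t(1) t(2)])
  qed
  thus ?thesis unfolding Cu_def by (rule someI_ex)
qed

lemma Msym_carrier: "Msym n eps l m \<in> carrier_mat (length (enum n eps l m)) (length (enum n eps l m))"
  unfolding Msym_def by simp

lemma enum_mem: "r < length (enum n eps l m) \<Longrightarrow> enum n eps l m ! r \<in> Bt n eps l m \<times> Bt n eps l m"
  using enum_prop[of n eps l m] nth_mem[of r "enum n eps l m"] by simp

lemma P_nz: assumes n: "2 \<le> n" shows "det (Msym n eps l m) \<noteq> 0"
proof -
  interpret ph: comm_ring_hom "phi n" by (rule phi_hom)
  interpret e: comm_ring_hom eF by (rule eF_hom)
  interpret h0: comm_ring_hom "\<lambda>p::K poly. coeff p 0" by unfold_locales (simp_all add: coeff_mult_0)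
  define xs where "xs = enum n eps l m"
  define M where "M = length xs"
  define B where "B = Bt n eps l m"
  define A where "A = Msym n eps l m"
  have A: "A \<in> carrier_mat M M" unfolding A_def M_def xs_def by (rule Msym_carrier)
  have xsB: "fst (xs ! r) \<in> B \<and> snd (xs ! r) \<in> B" if "r < M" for r
    using enum_mem[of r n eps l m] that unfolding xs_def M_def B_def by (simp add: mem_Times_iff)
  have dist: "distinct xs" using enum_prop[of n eps l m] unfolding xs_def by simp
  define N where "N = mat M M (\<lambda>(r, j). gcm B (G n eps l m) (\<lambda>c. [:c:]) (Cu n eps l m (xs ! j)) (fst (xs ! r)) (snd (xs ! r)))"
  have N: "N \<in> carrier_mat M M" unfolding N_def by simp
  define Dj where "Dj j = Dg n (fst (xs ! j)) (snd (xs ! j))" for j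
  define ga where "ga r = gg n (fst (xs ! r)) - gg n (snd (xs ! r))" for r
  have entry: "map_mat (phi n) A $$ (r, j) = sF powi (- ga r + Dj j) * eF (N $$ (r, j))" if rj: "r < M" "j < M" for r j
  proof -
    have jB: "xs ! j \<in> B \<times> B" using xsB[OF rj(2)] by (simp add: mem_Times_iff)
    have "map_mat (phi n) A $$ (r, j) = phi n (gcm B (SM n eps l m) cK (Cu n eps l m (xs ! j)) (fst (xs ! r)) (snd (xs ! r)))"
      using A rj unfolding A_def Msym_def xs_def[symmetric] M_def[symmetric] B_def[symmetric] by simp
    also have "\<dots> = sF powi (gg n (snd (xs ! r)) - gg n (fst (xs ! r)) + Dj j) * eF (gcm B (G n eps l m) (\<lambda>c. [:c:]) (Cu n eps l m (xs ! j)) (fst (xs ! r)) (snd (xs ! r)))"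
      unfolding Dj_def
      by (rule phi_gcm[OF _ n]) (use finite_Bt Cu_prop[OF n jB[unfolded B_def]] in \<open>auto simp: B_def\<close>)
    finally show ?thesis using rj unfolding N_def ga_def by simp
  qed
  define Ga where "Ga = dmat M (\<lambda>r. sF powi ga r)"
  define De where "De = dmat M (\<lambda>j. sF powi Dj j)"
  have eq: "Ga * map_mat (phi n) A = map_mat eF N * De"
  proof (rule eq_matI)
    fix r j assume r: "r < dim_row (map_mat eF N * De)" and j: "j < dim_col (map_mat eF N * De)"
    hence rj: "r < M" "j < M" using N unfolding De_def dmat_def by auto
    have "(Ga * map_mat (phi n) A) $$ (r, j) = sF powi ga r * (sF powi (- ga r + Dj j) * eF (N $$ (r, j)))"
      unfolding Ga_def using dmat_mult_left[of "map_mat (phi n) A" M r j] A rj entry[OF rj] by simp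
    also have "\<dots> = eF (N $$ (r, j)) * sF powi Dj j"
      by (simp add: mult.assoc[symmetric] power_int_add[symmetric] mult.commute)
    also have "\<dots> = (map_mat eF N * De) $$ (r, j)"
      unfolding De_def using dmat_mult_right[of "map_mat eF N" M r j] N rj by simp
    finally show "(Ga * map_mat (phi n) A) $$ (r, j) = (map_mat eF N * De) $$ (r, j)" .
  qed (use A N in \<open>auto simp: Ga_def De_def dmat_def\<close>)
  have "det (Ga * map_mat (phi n) A) = det Ga * phi n (det A)"
    using det_mult[of Ga M "map_mat (phi n) A"] A unfolding Ga_def by (simp add: dmat_carrier ph.hom_det)
  moreover have "det (map_mat eF N * De) = eF (det N) * det De"
    using det_mult[of "map_mat eF N" M De] N unfolding De_def by (simp add: dmat_carrier e.hom_det)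
  moreover have "det De \<noteq> 0" unfolding De_def by (rule det_dmat_nz) simp
  moreover have "det N \<noteq> 0"
  proof -
    have "map_mat (\<lambda>p. coeff p 0) N = 1\<^sub>m M"
    proof (rule eq_matI)
      fix r j assume "r < dim_row (1\<^sub>m M :: K mat)" "j < dim_col (1\<^sub>m M :: K mat)"
      hence rj: "r < M" "j < M" by auto
      have jB: "xs ! j \<in> B \<times> B" using xsB[OF rj(2)] by (simp add: mem_Times_iff)
      have "map_mat (\<lambda>p. coeff p 0) N $$ (r, j) = poly (gcm B (G n eps l m) (\<lambda>c. [:c:]) (Cu n eps l m (xs ! j)) (fst (xs ! r)) (snd (xs ! r))) 0"
        using N rj unfolding N_def by (simp add: poly_0_coeff_0)
      also have "\<dots> = gcm B (L0 n eps l m) (\<lambda>c. c) (Cu n eps l m (xs ! j)) (fst (xs ! r)) (snd (xs ! r))"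
        by (rule poly0_gcm)
      also have "\<dots> = (if fst (xs ! r) = fst (xs ! j) \<and> snd (xs ! r) = snd (xs ! j) then 1 else 0)"
        using Cu_prop[OF n jB[unfolded B_def]] xsB[OF rj(1)] unfolding B_def by auto
      also have "\<dots> = (if r = j then 1 else 0)"
        using nth_eq_iff_index_eq[OF dist] rj unfolding M_def by (auto simp: prod_eq_iff)
      finally show "map_mat (\<lambda>p. coeff p 0) N $$ (r, j) = 1\<^sub>m M $$ (r, j)" using rj by simp
    qed (use N in auto)
    hence "coeff (det N) 0 = 1" using h0.hom_det[of N] by simp
    thus ?thesis by auto
  qed
  moreover have "det Ga \<noteq> 0" unfolding Ga_def by (rule det_dmat_nz) simp
  ultimately have "phi n (det A) \<noteq> 0" using eq by (metis mult_eq_0_iff e.hom_zero eF_eq0)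
  thus ?thesis unfolding A_def by auto
qed


lemma TM_closed:
  assumes inv: "invariant_subspace (Bt n eps l m) (tensor_gens n eps l m x y) S" and a: "vl n a"
  shows "closedS (Bt n eps l m) S (TM n eps l m x y a)"
proof (cases a)
  case (LE i)
  have "TEmat n eps l m x y i \<in> tensor_gens n eps l m x y" using a LE unfolding tensor_gens_def vl_def by auto
  thus ?thesis using closed_gen[OF inv finite_Bt] LE unfolding TM_def by simp
next
  case (LF i)
  have "TFmat n eps l m x y i \<in> tensor_gens n eps l m x y" using a LF unfolding tensor_gens_def vl_def by auto
  hence "closedS (Bt n eps l m) S (TFmat n eps l m x y i)" using closed_gen[OF inv finite_Bt] by simp
  hence "closedS (Bt n eps l m) S (\<lambda>u' u. (if i = 0 then x * y else 1) * TFmat n eps l m x y i u' u)"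
    by (rule closed_smult[OF inv finite_Bt])
  thus ?thesis using LF unfolding TM_def by simp
qed

lemma ev_gcm: assumes "x \<noteq> 0" "y \<noteq> 0"
  shows "ev x y (gcm B (SM n eps l m) cK C u' u) = gcm B (TM n eps l m x y) (\<lambda>c. c) C u' u"
proof -
  interpret h: comm_ring_hom "ev x y" by (rule ev_hom)
  have e: "(\<lambda>a i k. ev x y (SM n eps l m a i k)) = TM n eps l m x y" using ev_SM[OF assms] by (auto simp: fun_eq_iff)
  show ?thesis unfolding h.hom_gcm e by simp
qed

lemma P_irr:
  assumes n: "2 \<le> n" and ne: "Bt n eps l m \<noteq> {}" and x: "x \<noteq> 0" and y: "y \<noteq> 0"
    and ev: "ev x y (det (Msym n eps l m)) \<noteq> 0"
  shows "irreducible_mod (Bt n eps l m) (tensor_gens n eps l m x y)"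
proof -
  interpret h: comm_ring_hom "ev x y" by (rule ev_hom)
  define xs where "xs = enum n eps l m"
  define M where "M = length xs"
  define B where "B = Bt n eps l m"
  define A where "A = map_mat (ev x y) (Msym n eps l m)"
  have A: "A \<in> carrier_mat M M" unfolding A_def M_def xs_def using Msym_carrier by simp
  have dA: "det A \<noteq> 0" unfolding A_def h.hom_det using ev .
  have xsB: "fst (xs ! r) \<in> B \<and> snd (xs ! r) \<in> B" if "r < M" for r
    using enum_mem[of r n eps l m] that unfolding xs_def M_def B_def by (simp add: mem_Times_iff)
  have setxs: "set xs = B \<times> B" using enum_prop[of n eps l m] unfolding xs_def B_def by simp
  have Aentry: "A $$ (r, k) = gcm B (TM n eps l m x y) (\<lambda>c. c) (Cu n eps l m (xs ! k)) (fst (xs ! r)) (snd (xs ! r))"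
    if "r < M" "k < M" for r k
    using that ev_gcm[OF x y] unfolding A_def Msym_def xs_def[symmetric] M_def[symmetric] B_def[symmetric] by simp
  have "\<exists>v\<in>Vspace B. v \<noteq> (\<lambda>_. 0)"
  proof -
    obtain t where t: "t \<in> B" using ne unfolding B_def by blast
    define v where "v = (\<lambda>b. if b = t then (1::K) else 0)"
    have "v \<in> Vspace B" unfolding v_def Vspace_def using t by auto
    moreover have "v t = 1" unfolding v_def by simp
    hence "v \<noteq> (\<lambda>_. 0)" by (metis zero_neq_one)
    ultimately show ?thesis by blast
  qed
  moreover have "S = {\<lambda>_. 0} \<or> S = Vspace B" if inv: "invariant_subspace B (tensor_gens n eps l m x y) S" for S
  proof (rule units_give_all[OF inv])
    show "finite B" unfolding B_def by (rule finite_Bt)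
  next
    fix t t' assume t: "t \<in> B" and t': "t' \<in> B"
    have "(t', t) \<in> set xs" using setxs t t' by simp
    then obtain j0 where j0: "j0 < M" "xs ! j0 = (t', t)" unfolding M_def by (auto simp: in_set_conv_nth)
    obtain c where c: "\<forall>r<M. (\<Sum>k<M. A $$ (r, k) * c k) = (if r = j0 then 1 else 0)"
      using span_from_det[OF A dA j0(1)] by blast
    define Z where "Z = (\<lambda>u' u. \<Sum>k<M. c k * gcm B (TM n eps l m x y) (\<lambda>c. c) (Cu n eps l m (xs ! k)) u' u)"
    have "closedS B S Z" unfolding Z_def
    proof (rule closed_sum[OF inv[unfolded B_def] finite_Bt, unfolded B_def[symmetric]])
      show "finite {..<M}" by simp
    next
      fix k assume k: "k \<in> {..<M}"
      have kB: "xs ! k \<in> Bt n eps l m \<times> Bt n eps l m" using xsB[of k] k unfolding B_def by (auto simp: mem_Times_iff)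
      have "closedS B S (gcm B (TM n eps l m x y) (\<lambda>c. c) (Cu n eps l m (xs ! k)))"
        unfolding B_def
        by (rule closed_gcm[OF inv[unfolded B_def] finite_Bt], rule TM_closed[OF inv[unfolded B_def]])
          (use Cu_prop[OF n kB] in auto)
      thus "closedS B S (\<lambda>u' u. c k * gcm B (TM n eps l m x y) (\<lambda>c. c) (Cu n eps l m (xs ! k)) u' u)"
        by (rule closed_smult[OF inv finite_Bt[of n eps l m, folded B_def]])
    qed
    moreover have "\<forall>u'\<in>B. \<forall>u\<in>B. Z u' u = (if u' = t' \<and> u = t then 1 else 0)"
    proof (intro ballI)
      fix u' u assume u': "u' \<in> B" and u: "u \<in> B"
      have "(u', u) \<in> set xs" using setxs u u' by simp
      then obtain r where r: "r < M" "xs ! r = (u', u)" unfolding M_def by (auto simp: in_set_conv_nth)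
      have "Z u' u = (\<Sum>k<M. A $$ (r, k) * c k)"
        unfolding Z_def using Aentry[OF r(1)] r(2) by (intro sum.cong) (auto simp: mult.commute)
      also have "\<dots> = (if r = j0 then 1 else 0)" using c r(1) by simp
      also have "\<dots> = (if u' = t' \<and> u = t then 1 else 0)"
      proof -
        have dist: "distinct xs" using enum_prop[of n eps l m] unfolding xs_def by simp
        have "(r = j0) = (xs ! r = xs ! j0)" using nth_eq_iff_index_eq[OF dist] r(1) j0(1) unfolding M_def by auto
        thus ?thesis using r(2) j0(2) by simp
      qed
      finally show "Z u' u = (if u' = t' \<and> u = t then 1 else 0)" .
    qed
    ultimately show "\<exists>Z. closedS B S Z \<and> (\<forall>u'\<in>B. \<forall>u\<in>B. Z u' u = (if u' = t' \<and> u = t then 1 else 0))" by blast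
  qed
  ultimately show ?thesis unfolding irreducible_mod_def B_def by blast
qed

theorem corollary4p9:
  fixes n l m :: nat and eps :: "nat \<Rightarrow> bool"
  assumes "4 \<le> n" and "Wbasis n eps l \<noteq> {}" and "Wbasis n eps m \<noteq> {}"
  shows "\<exists>P :: K poly poly. P \<noteq> 0 \<and>
    (\<forall>x y :: K. x \<noteq> 0 \<longrightarrow> y \<noteq> 0 \<longrightarrow> poly (map_poly (\<lambda>c. poly c x) P) y \<noteq> 0 \<longrightarrow>
       irreducible_mod (Wbasis n eps l \<times> Wbasis n eps m) (tensor_gens n eps l m x y))"
proof (intro exI conjI allI impI)
  have n: "2 \<le> n" using assms(1) by simp
  show "det (Msym n eps l m) \<noteq> 0" by (rule P_nz[OF n])
  fix x y :: K assume x: "x \<noteq> 0" and y: "y \<noteq> 0"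
    and e: "poly (map_poly (\<lambda>c. poly c x) (det (Msym n eps l m))) y \<noteq> 0"
  have ne: "Bt n eps l m \<noteq> {}" unfolding Bt_def using assms(2,3) by simp
  show "irreducible_mod (Wbasis n eps l \<times> Wbasis n eps m) (tensor_gens n eps l m x y)"
    using P_irr[OF n ne x y] e unfolding ev_def Bt_def by simp
qed


end
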